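(* Suppose every class $c\in[C]$ uses a revision protocol $\rho^c$ that is either imitative via comparison, excess payoff, or pairwise comparison (different classes may use different families). Let $\mu^\star\in X$ be a rest point of the evolutionary dynamics (E). If $\mu^\star$ is not an MSNE, then $\mu^\star$ is not Lyapunov stable under (E), and no solution of (E) with initial condition $\mu(0)$ in the relative interior of $X$ (i.e. $\mu^c[s,u](0)>0$ for all $c,s,u$) converges to $\mu^\star$.
   Context: Setting. There are $C$ classes of players, $[C]=\{1,\dots,C\}$. For each class $c\in[C]$: $\mathcal S^c$ is a finite state set with $p^c$ elements; for each $s\in\mathcal S^c$, $\mathcal A^c(s)$ is a nonempty finite action set; $\phi^c(\cdot\mid s,a)$ is a probability distribution on $\mathcal S^c$ for each $s\in\mathcal S^c$, $a\in\mathcal A^c(s)$; $\mathcal U^c_D$ is a finite set of $n^c$ deterministic stationary policies, each $u\in\mathcal U^c_D$ assigning to every $s$ a point mass $u(\cdot\mid s)$ on some action of $\mathcal A^c(s)$; $m^c>0$ is the mass of class $c$; $R^c_d>0$ is the state-transition rate. Let $n=\sum_c n^c$. For $u\in\mathcal U^c_D$ put $\phi^{c,u}(s\mid s')=\sum_{a'\in\mathcal A^c(s')}\phi^c(s\mid s',a')u(a'\mid s')$; standing assumption: the Markov chain on $\mathcal S^c$ with kernel $\phi^{c,u}$ has a unique recurrent communicating class, hence a unique stationary distribution $\eta^{c,u}$. The population state is $\mu=(\mu^c)_{c\in[C]}\in X:=\prod_c X^c$, where $X^c=\{\mu^c\in\mathbb R_{\ge0}^{\mathcal S^c\times\mathcal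 U^c_D}:\sum_{s,u}\mu^c[s,u]=m^c\}$; write $\mu^c[\mathcal S^c,u]:=\sum_{s\in\mathcal S^c}\mu^c[s,u]$ and $\mu^c[\mathcal S^c,\cdot]\in\mathbb R^{n^c}_{\ge0}$ for the vector of these. A payoff map $F=(F^c)_{c\in[C]}$ is given, with $F^c$ continuously differentiable on an open neighborhood of $X$ and valued in $\mathbb R^{\mathcal U^c_D}$ ($F^c_u(\mu)$ is the payoff of policy $u$ for class $c$). Each class has a revision protocol $\rho^c=(\rho^c_{uv})_{u,v\in\mathcal U^c_D}$, a Lipschitz continuous map $\mathbb R^{n^c}\times\mathbb R^{n^c}_{\ge0}\to\mathbb R^{n^c\times n^c}_{\ge0}$ whose first argument is a payoff vector and second a policy distribution. The evolutionary dynamics (E) are the ODE on $X$: for all $c\in[C]$, $s\in\mathcal S^c$, $u\in\mathcal U^c_D$, $\dot\mu^c[s,u]=f^{c,d}_{s,u}(\mu)+f^{c,r}_{s,u}(\mu)$, where $f^{c,d}_{s,u}(\mu)=R^c_d\sum_{s'\in\mathcal S^c}\sum_{a'\in\mathcal A^c(s')}\phi^c(s\mid s',a')u(a'\mid s')\mu^c[s',u]-R^c_d\mu^c[s,u]$ and $f^{c,r}_{s,u}(\mu)=\sum_{u'\in\mathcal U^c_D}\mu^c[s,u']\rho^c_{u'u}(F^c(\mu),\mu^c[\mathcal S^c,\cdot])-\mu^c[s,u]\sum_{u'\in\mathcal U^c_D}\rho^c_{uu'}(F^c(\mu),\mu^c[\mathcal S^c,\cdot])$. Solutions from $X$ exist,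 are unique and remain in $X$. A state $\mu\in X$ is a mixed stationary Nash equilibrium (MSNE) if for every $c\in[C]$: (a) for all $u\in\mathcal U^c_D$, $\mu^c[\mathcal S^c,u]>0\Rightarrow F^c_u(\mu)\ge F^c_v(\mu)$ for all $v\in\mathcal U^c_D$; and (b) $f^{c,d}_{s,u}(\mu)=0$ for all $s\in\mathcal S^c,u\in\mathcal U^c_D$. $\mathrm{MSNE}(F,\phi)$ denotes the set of MSNE. Protocol families (for class $c$; $\pi\in\mathbb R^{n^c}$ a payoff vector, $x\in\mathbb R^{n^c}_{\ge0}$ a policy distribution of total mass $m^c$): - imitative: $\rho^c_{uv}(\pi,x)=\frac{x_v}{m^c}r^c_{uv}(\pi,x)$ with $r^c\ge0$ Lipschitz and monotone net conditional imitation rates: for all $u,v,w$, $\pi_v\ge\pi_u\iff r^c_{wv}(\pi,x)-r^c_{vw}(\pi,x)\ge r^c_{wu}(\pi,x)-r^c_{uw}(\pi,x)$; - imitative via comparison: an imitative protocol with $r^c_{uv}(\pi,x)=\varphi^c(\pi_v-\pi_u)$, where $\varphi^c$ is Lipschitz, $\varphi^c(d)=0$ for $d\le0$ and $\varphi^c(d)>0$ for $d>0$; - excess payoff: $\rho^c_{uv}(\pi,x)=\tau^c_v(\hat\pi)$ with $\hat\pi_v=\pi_v-\frac1{m^c}\sum_w x_w\pi_w$, $\tau^c:\mathbb R^{n^c}\to\mathbb R^{n^c}_{\ge0}$ Lipschitz and $\tau^c(\hat\pi)^\top\hat\pi>0$ whenever $\hat\pi$ has a positive component; it is separable if $\tau^c_v(\hat\pi)=\tau^c_v(\hat\pi_v)$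 depends only on $\hat\pi_v$, with $\tau^c_v(d)>0\iff d>0$; - pairwise comparison: $\rho^c_{uv}(\pi,x)=\rho^c_{uv}(\pi)$ independent of $x$, Lipschitz, with $\rho^c_{uv}(\pi)>0\iff\pi_v>\pi_u$; it is impartial if $\rho^c_{uv}(\pi)=\varphi^c_v(\pi_v-\pi_u)$ for some functions $\varphi^c_v$. *)

theory Defs
  imports "HOL-Analysis.Analysis"
begin

(* Population states: vectors indexed by (class, state, deterministic policy).
   Classes form the finite type 'c; the state set of class c is S c (a subset of the
   finite type 's); actions live in the finite type 'a; a deterministic stationary policy
   is a map 's => 'a (its point mass u(.|s) is the action u s). Components whose
   (s,u) is not in S c x U c are constrained to be 0 in X. *)
type_synonym ('c,'s,'a) pop = "real ^ ('c \<times> 's \<times> ('s \<Rightarrow> 'a))"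

definition upol :: "('s \<Rightarrow> 'a) \<Rightarrow> 's \<Rightarrow> 'a \<Rightarrow> real" where
  "upol u s a = (if u s = a then 1 else 0)"

definition popX :: "('c \<Rightarrow> 's set) \<Rightarrow> ('c \<Rightarrow> ('s \<Rightarrow> 'a) set) \<Rightarrow> ('c \<Rightarrow> real)
    \<Rightarrow> ('c::finite, 's::finite, 'a::finite) pop set" where
  "popX S U m = {\<mu>. (\<forall>c s u. 0 \<le> \<mu> $ (c, s, u))
      \<and> (\<forall>c s u. (s \<notin> S c \<or> u \<notin> U c) \<longrightarrow> \<mu> $ (c, s, u) = 0)
      \<and> (\<forall>c. (\<Sum>s\<in>S c. \<Sum>u\<in>U c. \<mu> $ (c, s, u)) = m c)}"

definition polmass :: "('c \<Rightarrow> 's set) \<Rightarrow> ('c::finite, 's::finite, 'a::finite) pop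
    \<Rightarrow> 'c \<Rightarrow> ('s \<Rightarrow> 'a) \<Rightarrow> real" where
  "polmass S \<mu> c = (\<lambda>u. \<Sum>s\<in>S c. \<mu> $ (c, s, u))"

(* phi c s' a' s  =  phi^c(s | s', a') *)
definition fd :: "('c \<Rightarrow> 's set) \<Rightarrow> ('c \<Rightarrow> 's \<Rightarrow> 'a set) \<Rightarrow> ('c \<Rightarrow> 's \<Rightarrow> 'a \<Rightarrow> 's \<Rightarrow> real)
    \<Rightarrow> ('c \<Rightarrow> real) \<Rightarrow> 'c \<Rightarrow> 's \<Rightarrow> ('s \<Rightarrow> 'a) \<Rightarrow> ('c::finite, 's::finite, 'a::finite) pop \<Rightarrow> real" where
  "fd S A phi Rd c s u \<mu> =
     Rd c * (\<Sum>s'\<in>S c. \<Sum>a'\<in>A c s'. phi c s' a' s * upol u s' a' * \<mu> $ (c, s', u))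
     - Rd c * \<mu> $ (c, s, u)"

(* rho c pi x u v = rho^c_{uv}(pi, x) *)
definition fr :: "('c \<Rightarrow> 's set) \<Rightarrow> ('c \<Rightarrow> ('s \<Rightarrow> 'a) set)
    \<Rightarrow> ('c \<Rightarrow> ('c, 's, 'a) pop \<Rightarrow> ('s \<Rightarrow> 'a) \<Rightarrow> real)
    \<Rightarrow> ('c \<Rightarrow> (('s \<Rightarrow> 'a) \<Rightarrow> real) \<Rightarrow> (('s \<Rightarrow> 'a) \<Rightarrow> real) \<Rightarrow> ('s \<Rightarrow> 'a) \<Rightarrow> ('s \<Rightarrow> 'a) \<Rightarrow> real)
    \<Rightarrow> 'c \<Rightarrow> 's \<Rightarrow> ('s \<Rightarrow> 'a) \<Rightarrow> ('c::finite, 's::finite, 'a::finite) pop \<Rightarrow> real" where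
  "fr S U F rho c s u \<mu> =
     (\<Sum>u'\<in>U c. \<mu> $ (c, s, u') * rho c (F c \<mu>) (polmass S \<mu> c) u' u)
     - \<mu> $ (c, s, u) * (\<Sum>u'\<in>U c. rho c (F c \<mu>) (polmass S \<mu> c) u u')"

definition field where
  "field S A phi U Rd F rho \<mu> =
     (\<chi> i. case i of (c, s, u) \<Rightarrow>
        if s \<in> S c \<and> u \<in> U c then fd S A phi Rd c s u \<mu> + fr S U F rho c s u \<mu> else 0)"

definition is_solution where
  "is_solution S A phi U m Rd F rho x \<longleftrightarrow>
     (\<forall>t\<ge>0. x t \<in> popX S U m \<and>
        (x has_vector_derivative field S A phi U Rd F rho (x t)) (at t within {0..}))"

definition rest_point where
  "rest_point S A phi U m Rd F rho \<mu> \<longleftrightarrow>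
     \<mu> \<in> popX S U m \<and> field S A phi U Rd F rho \<mu> = 0"

definition MSNE where
  "MSNE S A phi U m Rd F =
     {\<mu> \<in> popX S U m. \<forall>c.
        (\<forall>u\<in>U c. polmass S \<mu> c u > 0 \<longrightarrow> (\<forall>v\<in>U c. F c \<mu> u \<ge> F c \<mu> v))
      \<and> (\<forall>s\<in>S c. \<forall>u\<in>U c. fd S A phi Rd c s u \<mu> = 0)}"

definition lyapunov_stable where
  "lyapunov_stable S A phi U m Rd F rho \<mu>s \<longleftrightarrow>
     (\<forall>\<epsilon>>0. \<exists>\<delta>>0. \<forall>x. is_solution S A phi U m Rd F rho x \<and> dist (x 0) \<mu>s < \<delta>
        \<longrightarrow> (\<forall>t\<ge>0. dist (x t) \<mu>s < \<epsilon>))"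

definition kernel :: "('c \<Rightarrow> 's \<Rightarrow> 'a set) \<Rightarrow> ('c \<Rightarrow> 's \<Rightarrow> 'a \<Rightarrow> 's \<Rightarrow> real) \<Rightarrow> 'c
    \<Rightarrow> ('s \<Rightarrow> 'a) \<Rightarrow> 's \<Rightarrow> 's \<Rightarrow> real" where
  "kernel A phi c u s' s = (\<Sum>a'\<in>A c s'. phi c s' a' s * upol u s' a')"

definition reach where
  "reach S A phi c u = ({(s', s). s' \<in> S c \<and> s \<in> S c \<and> kernel A phi c u s' s > 0})\<^sup>*"

definition recurrent_states where
  "recurrent_states S A phi c u =
     {s \<in> S c. \<forall>t. (s, t) \<in> reach S A phi c u \<longrightarrow> (t, s) \<in> reach S A phi c u}"

definition unique_recurrent_class where
  "unique_recurrent_class S A phi c u \<longleftrightarrow>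
     recurrent_states S A phi c u \<noteq> {} \<and>
     (\<forall>s\<in>recurrent_states S A phi c u. \<forall>t\<in>recurrent_states S A phi c u.
        (s, t) \<in> reach S A phi c u)"

definition standing :: "('c::finite \<Rightarrow> 's::finite set) \<Rightarrow> ('c \<Rightarrow> 's \<Rightarrow> 'a::finite set)
    \<Rightarrow> ('c \<Rightarrow> 's \<Rightarrow> 'a \<Rightarrow> 's \<Rightarrow> real) \<Rightarrow> ('c \<Rightarrow> ('s \<Rightarrow> 'a) set) \<Rightarrow> ('c \<Rightarrow> real) \<Rightarrow> ('c \<Rightarrow> real)
    \<Rightarrow> bool" where
  "standing S A phi U m Rd \<longleftrightarrow> (\<forall>c.
      (\<forall>s\<in>S c. A c s \<noteq> {})
    \<and> (\<forall>s'\<in>S c. \<forall>a'\<in>A c s'. (\<forall>s\<in>S c. 0 \<le> phi c s' a' s) \<and> (\<Sum>s\<in>S c. phi c s' a' s) = 1)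
    \<and> (\<forall>u\<in>U c. \<forall>s\<in>S c. u s \<in> A c s)
    \<and> U c \<subseteq> extensional (S c)
    \<and> 0 < m c \<and> 0 < Rd c
    \<and> (\<forall>u\<in>U c. unique_recurrent_class S A phi c u))"

definition C1_near_X where
  "C1_near_X S U m F \<longleftrightarrow> (\<exists>N. open N \<and> popX S U m \<subseteq> N \<and>
     (\<forall>c. \<forall>u\<in>U c. \<exists>F'. (\<forall>y\<in>N. ((\<lambda>\<mu>. F c \<mu> u) has_derivative F' y) (at y))
                     \<and> (\<forall>v. continuous_on N (\<lambda>y. F' y v))))"

definition policy_distr :: "'u set \<Rightarrow> real \<Rightarrow> ('u \<Rightarrow> real) \<Rightarrow> bool" where
  "policy_distr U M x \<longleftrightarrow> (\<forall>w\<in>U. 0 \<le> x w) \<and> (\<Sum>w\<in>U. x w) = M"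

definition imitative :: "'u set \<Rightarrow> real \<Rightarrow> (('u \<Rightarrow> real) \<Rightarrow> ('u \<Rightarrow> real) \<Rightarrow> 'u \<Rightarrow> 'u \<Rightarrow> real)
    \<Rightarrow> (('u \<Rightarrow> real) \<Rightarrow> ('u \<Rightarrow> real) \<Rightarrow> 'u \<Rightarrow> 'u \<Rightarrow> real) \<Rightarrow> bool" where
  "imitative U M r rho \<longleftrightarrow>
     (\<forall>\<pi> x u v. policy_distr U M x \<and> u \<in> U \<and> v \<in> U \<longrightarrow>
        rho \<pi> x u v = x v / M * r \<pi> x u v \<and> 0 \<le> r \<pi> x u v)
   \<and> (\<exists>L. \<forall>\<pi> \<pi>' x x' u v. policy_distr U M x \<and> policy_distr U M x' \<and> u \<in> U \<and> v \<in> U \<longrightarrow>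
        \<bar>r \<pi> x u v - r \<pi>' x' u v\<bar> \<le> L * (\<Sum>w\<in>U. \<bar>\<pi> w - \<pi>' w\<bar> + \<bar>x w - x' w\<bar>))
   \<and> (\<forall>\<pi> x u v w. policy_distr U M x \<and> u \<in> U \<and> v \<in> U \<and> w \<in> U \<longrightarrow>
        (\<pi> v \<ge> \<pi> u \<longleftrightarrow> r \<pi> x w v - r \<pi> x v w \<ge> r \<pi> x w u - r \<pi> x u w))"

definition imitative_via_comparison :: "'u set \<Rightarrow> real
    \<Rightarrow> (('u \<Rightarrow> real) \<Rightarrow> ('u \<Rightarrow> real) \<Rightarrow> 'u \<Rightarrow> 'u \<Rightarrow> real) \<Rightarrow> bool" where
  "imitative_via_comparison U M rho \<longleftrightarrow> (\<exists>\<phi> :: real \<Rightarrow> real.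
      (\<exists>L. \<forall>a b. \<bar>\<phi> a - \<phi> b\<bar> \<le> L * \<bar>a - b\<bar>)
    \<and> (\<forall>d\<le>0. \<phi> d = 0) \<and> (\<forall>d>0. \<phi> d > 0)
    \<and> imitative U M (\<lambda>\<pi> x u v. \<phi> (\<pi> v - \<pi> u)) rho)"

definition excess_payoff :: "'u set \<Rightarrow> real
    \<Rightarrow> (('u \<Rightarrow> real) \<Rightarrow> ('u \<Rightarrow> real) \<Rightarrow> 'u \<Rightarrow> 'u \<Rightarrow> real) \<Rightarrow> bool" where
  "excess_payoff U M rho \<longleftrightarrow> (\<exists>\<tau> :: ('u \<Rightarrow> real) \<Rightarrow> 'u \<Rightarrow> real.
      (\<forall>p v. v \<in> U \<longrightarrow> 0 \<le> \<tau> p v)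
    \<and> (\<exists>L. \<forall>p q v. v \<in> U \<longrightarrow> \<bar>\<tau> p v - \<tau> q v\<bar> \<le> L * (\<Sum>w\<in>U. \<bar>p w - q w\<bar>))
    \<and> (\<forall>p. (\<exists>v\<in>U. p v > 0) \<longrightarrow> (\<Sum>v\<in>U. \<tau> p v * p v) > 0)
    \<and> (\<forall>\<pi> x u v. policy_distr U M x \<and> u \<in> U \<and> v \<in> U \<longrightarrow>
         rho \<pi> x u v = \<tau> (\<lambda>w. \<pi> w - (\<Sum>w'\<in>U. x w' * \<pi> w') / M) v))"

definition pairwise_comparison :: "'u set \<Rightarrow> real
    \<Rightarrow> (('u \<Rightarrow> real) \<Rightarrow> ('u \<Rightarrow> real) \<Rightarrow> 'u \<Rightarrow> 'u \<Rightarrow> real) \<Rightarrow> bool" where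
  "pairwise_comparison U M rho \<longleftrightarrow>
      (\<forall>\<pi> x x' u v. policy_distr U M x \<and> policy_distr U M x' \<and> u \<in> U \<and> v \<in> U \<longrightarrow>
         rho \<pi> x u v = rho \<pi> x' u v)
    \<and> (\<forall>\<pi> x u v. policy_distr U M x \<and> u \<in> U \<and> v \<in> U \<longrightarrow>
         0 \<le> rho \<pi> x u v \<and> (rho \<pi> x u v > 0 \<longleftrightarrow> \<pi> v > \<pi> u))
    \<and> (\<exists>L. \<forall>\<pi> \<pi>' x u v. policy_distr U M x \<and> u \<in> U \<and> v \<in> U \<longrightarrow>
         \<bar>rho \<pi> x u v - rho \<pi>' x u v\<bar> \<le> L * (\<Sum>w\<in>U. \<bar>\<pi> w - \<pi>' w\<bar>))"

definition well_posed where
  "well_posed S A phi U m Rd F rho \<longleftrightarrow>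
     (\<forall>\<mu>0\<in>popX S U m. \<exists>x. is_solution S A phi U m Rd F rho x \<and> x 0 = \<mu>0)
   \<and> (\<forall>x y. is_solution S A phi U m Rd F rho x \<and> is_solution S A phi U m Rd F rho y \<and> x 0 = y 0
        \<longrightarrow> (\<forall>t\<ge>0. x t = y t))"

end

theory Submission
  imports Defs
begin
lemma fin_U: "finite (X :: ('s::finite \<Rightarrow> 'a::finite) set)" by simp

lemma sum_fd_zero:
  assumes st: "standing S A phi U m Rd" and u: "u \<in> U c"
  shows "(\<Sum>s\<in>S c. fd S A phi Rd c s u \<mu>) = 0"
proof -
  have inner: "(\<Sum>s\<in>S c. \<Sum>s'\<in>S c. \<Sum>a'\<in>A c s'. phi c s' a' s * upol u s' a' * \<mu> $ (c, s', u))
      = (\<Sum>s'\<in>S c. \<mu> $ (c, s', u))"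
  proof -
    have "(\<Sum>s\<in>S c. \<Sum>s'\<in>S c. \<Sum>a'\<in>A c s'. phi c s' a' s * upol u s' a' * \<mu> $ (c, s', u))
       = (\<Sum>s'\<in>S c. \<Sum>a'\<in>A c s'. (\<Sum>s\<in>S c. phi c s' a' s) * upol u s' a' * \<mu> $ (c, s', u))"
    proof -
      have "(\<Sum>s\<in>S c. \<Sum>s'\<in>S c. \<Sum>a'\<in>A c s'. phi c s' a' s * upol u s' a' * \<mu> $ (c, s', u))
         = (\<Sum>s'\<in>S c. \<Sum>s\<in>S c. \<Sum>a'\<in>A c s'. phi c s' a' s * upol u s' a' * \<mu> $ (c, s', u))"
        by (rule sum.swap)
      also have "\<dots> = (\<Sum>s'\<in>S c. \<Sum>a'\<in>A c s'. \<Sum>s\<in>S c. phi c s' a' s * upol u s' a' * \<mu> $ (c, s', u))"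
        by (intro sum.cong refl) (rule sum.swap)
      also have "\<dots> = (\<Sum>s'\<in>S c. \<Sum>a'\<in>A c s'. (\<Sum>s\<in>S c. phi c s' a' s) * upol u s' a' * \<mu> $ (c, s', u))"
        by (simp add: sum_distrib_right)
      finally show ?thesis .
    qed
    also have "\<dots> = (\<Sum>s'\<in>S c. \<Sum>a'\<in>A c s'. upol u s' a' * \<mu> $ (c, s', u))"
      using st unfolding standing_def by (intro sum.cong refl) auto
    also have "\<dots> = (\<Sum>s'\<in>S c. \<mu> $ (c, s', u))"
    proof (intro sum.cong refl)
      fix s' assume s': "s' \<in> S c"
      have "u s' \<in> A c s'" using st u s' unfolding standing_def by auto
      then have "(\<Sum>a'\<in>A c s'. upol u s' a' * \<mu> $ (c, s', u)) = (\<Sum>a'\<in>A c s'. if a' = u s' then \<mu> $ (c, s', u) else 0)"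
        by (intro sum.cong refl) (auto simp: upol_def)
      also have "\<dots> = \<mu> $ (c, s', u)" using \<open>u s' \<in> A c s'\<close> by (simp add: sum.delta')
      finally show "(\<Sum>a'\<in>A c s'. upol u s' a' * \<mu> $ (c, s', u)) = \<mu> $ (c, s', u)" .
    qed
    finally show ?thesis .
  qed
  show ?thesis
    unfolding fd_def sum_subtractf sum_distrib_left[symmetric] inner by simp
qed

lemma sum_fr:
  assumes u: "u \<in> U c"
  shows "(\<Sum>s\<in>S c. fr S U F rho c s u \<mu>) =
    (\<Sum>u'\<in>U c. polmass S \<mu> c u' * rho c (F c \<mu>) (polmass S \<mu> c) u' u)
    - polmass S \<mu> c u * (\<Sum>u'\<in>U c. rho c (F c \<mu>) (polmass S \<mu> c) u u')"
proof -
  have "(\<Sum>s\<in>S c. \<Sum>u'\<in>U c. \<mu> $ (c, s, u') * rho c (F c \<mu>) (polmass S \<mu> c) u' u)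
     = (\<Sum>u'\<in>U c. \<Sum>s\<in>S c. \<mu> $ (c, s, u') * rho c (F c \<mu>) (polmass S \<mu> c) u' u)"
    by (rule sum.swap)
  also have "\<dots> = (\<Sum>u'\<in>U c. polmass S \<mu> c u' * rho c (F c \<mu>) (polmass S \<mu> c) u' u)"
    unfolding polmass_def by (simp add: sum_distrib_right)
  finally have 1: "(\<Sum>s\<in>S c. \<Sum>u'\<in>U c. \<mu> $ (c, s, u') * rho c (F c \<mu>) (polmass S \<mu> c) u' u)
     = (\<Sum>u'\<in>U c. polmass S \<mu> c u' * rho c (F c \<mu>) (polmass S \<mu> c) u' u)" .
  have 2: "(\<Sum>s\<in>S c. \<mu> $ (c, s, u) * (\<Sum>u'\<in>U c. rho c (F c \<mu>) (polmass S \<mu> c) u u'))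
     = polmass S \<mu> c u * (\<Sum>u'\<in>U c. rho c (F c \<mu>) (polmass S \<mu> c) u u')"
    unfolding polmass_def by (simp add: sum_distrib_right)
  show ?thesis unfolding fr_def sum_subtractf 1 2 ..
qed

lemma sum_field:
  assumes st: "standing S A phi U m Rd" and u: "u \<in> U c"
  shows "(\<Sum>s\<in>S c. field S A phi U Rd F rho \<mu> $ (c, s, u)) =
    (\<Sum>u'\<in>U c. polmass S \<mu> c u' * rho c (F c \<mu>) (polmass S \<mu> c) u' u)
    - polmass S \<mu> c u * (\<Sum>u'\<in>U c. rho c (F c \<mu>) (polmass S \<mu> c) u u')"
proof -
  have "(\<Sum>s\<in>S c. field S A phi U Rd F rho \<mu> $ (c, s, u)) =
     (\<Sum>s\<in>S c. fd S A phi Rd c s u \<mu> + fr S U F rho c s u \<mu>)"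
    using u by (intro sum.cong refl) (simp add: field_def)
  also have "\<dots> = (\<Sum>s\<in>S c. fr S U F rho c s u \<mu>)"
    by (simp add: sum.distrib sum_fd_zero[OF st u])
  finally show ?thesis using sum_fr[of u U c S F rho \<mu>] u by simp
qed

lemma polmass_distr:
  assumes "\<mu> \<in> popX S U m"
  shows "policy_distr (U c) (m c) (polmass S \<mu> c)"
proof -
  have "(\<Sum>u\<in>U c. \<Sum>s\<in>S c. \<mu> $ (c, s, u)) = (\<Sum>s\<in>S c. \<Sum>u\<in>U c. \<mu> $ (c, s, u))"
    by (rule sum.swap)
  then show ?thesis using assms unfolding popX_def policy_distr_def polmass_def
    by (auto intro: sum_nonneg)
qed

lemma finite_argmin:
  fixes f :: "'u \<Rightarrow> real"
  assumes "finite P" "P \<noteq> {}"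
  shows "\<exists>u0\<in>P. \<forall>u\<in>P. f u0 \<le> f u"
proof -
  have "Min (f ` P) \<in> f ` P" using assms by simp
  then obtain u0 where "u0 \<in> P" "f u0 = Min (f ` P)" by auto
  then show ?thesis using assms by (metis Min_le finite_imageI imageI)
qed

lemma finite_argmax:
  fixes f :: "'u \<Rightarrow> real"
  assumes "finite P" "P \<noteq> {}"
  shows "\<exists>u0\<in>P. \<forall>u\<in>P. f u \<le> f u0"
proof -
  have "Max (f ` P) \<in> f ` P" using assms by simp
  then obtain u0 where "u0 \<in> P" "f u0 = Max (f ` P)" by auto
  then show ?thesis using assms by (metis Max_ge finite_imageI imageI)
qed

lemma popX_nonneg: "\<mu> \<in> popX S U m \<Longrightarrow> 0 \<le> \<mu> $ i"
  unfolding popX_def by (cases i) auto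

lemma popX_out: "\<mu> \<in> popX S U m \<Longrightarrow> s \<notin> S c \<or> u \<notin> U c \<Longrightarrow> \<mu> $ (c, s, u) = 0"
  unfolding popX_def by auto

lemma polmass_nonneg: "\<mu> \<in> popX S U m \<Longrightarrow> 0 \<le> polmass S \<mu> c u"
  unfolding polmass_def by (auto intro: sum_nonneg popX_nonneg)

lemma le_polmass:
  assumes "\<mu> \<in> popX S U m" "s \<in> S c"
  shows "\<mu> $ (c, s, u) \<le> polmass S \<mu> c u"
  unfolding polmass_def
  using assms by (intro member_le_sum) (auto intro: popX_nonneg)

lemma polmass_zero:
  assumes "\<mu> \<in> popX S U m" "s \<in> S c" "polmass S \<mu> c u = 0"
  shows "\<mu> $ (c, s, u) = 0"
  using le_polmass[OF assms(1,2), of u] popX_nonneg[OF assms(1), of "(c,s,u)"] assms(3) by simp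

lemma used_exists:
  assumes "\<mu> \<in> popX S U m" "standing S A phi U m Rd"
  shows "\<exists>u\<in>U c. 0 < polmass S \<mu> c u"
proof (rule ccontr)
  assume "\<not> ?thesis"
  then have "\<forall>u\<in>U c. polmass S \<mu> c u \<le> 0" by auto
  then have "(\<Sum>u\<in>U c. polmass S \<mu> c u) \<le> 0" using sum_nonpos[of "U c" "polmass S \<mu> c"] by auto
  moreover have "(\<Sum>u\<in>U c. polmass S \<mu> c u) = m c" "m c > 0"
    using polmass_distr[OF assms(1), of c] assms(2) unfolding policy_distr_def standing_def by auto
  ultimately show False by simp
qed

lemma rest_policy:
  assumes st: "standing S A phi U m Rd" and rp: "rest_point S A phi U m Rd F rho \<mu>" and u: "u \<in> U c"
  shows "(\<Sum>u'\<in>U c. polmass S \<mu> c u' * rho c (F c \<mu>) (polmass S \<mu> c) u' u)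
    - polmass S \<mu> c u * (\<Sum>u'\<in>U c. rho c (F c \<mu>) (polmass S \<mu> c) u u') = 0"
proof -
  have "field S A phi U Rd F rho \<mu> = 0" using rp unfolding rest_point_def by simp
  then have "(\<Sum>s\<in>S c. field S A phi U Rd F rho \<mu> $ (c, s, u)) = 0" by simp
  then show ?thesis using sum_field[OF st u, of F rho \<mu>] by simp
qed

lemma rest_fd:
  assumes rp: "rest_point S A phi U m Rd F rho \<mu>" and s: "s \<in> S c" and u: "u \<in> U c"
    and fr0: "fr S U F rho c s u \<mu> = 0"
  shows "fd S A phi Rd c s u \<mu> = 0"
proof -
  have "field S A phi U Rd F rho \<mu> $ (c, s, u) = 0" using rp unfolding rest_point_def by simp
  then show ?thesis using s u fr0 by (simp add: field_def)
qed

lemma pairwise_ok: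
  assumes st: "standing S A phi U m Rd" and rp: "rest_point S A phi U m Rd F rho \<mu>"
    and pw: "pairwise_comparison (U c) (m c) (rho c)"
  shows "(\<forall>u\<in>U c. polmass S \<mu> c u > 0 \<longrightarrow> (\<forall>v\<in>U c. F c \<mu> u \<ge> F c \<mu> v))
       \<and> (\<forall>s\<in>S c. \<forall>u\<in>U c. fr S U F rho c s u \<mu> = 0)"
proof -
  have X: "\<mu> \<in> popX S U m" using rp unfolding rest_point_def by simp
  define x where "x = polmass S \<mu> c"
  define \<pi> where "\<pi> = F c \<mu>"
  define R where "R = rho c \<pi> x"
  have pd: "policy_distr (U c) (m c) x" unfolding x_def by (rule polmass_distr[OF X])
  have Rnn: "\<And>u v. u \<in> U c \<Longrightarrow> v \<in> U c \<Longrightarrow> 0 \<le> R u v"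
    and Rpos: "\<And>u v. u \<in> U c \<Longrightarrow> v \<in> U c \<Longrightarrow> R u v > 0 \<longleftrightarrow> \<pi> v > \<pi> u"
    using pw pd unfolding pairwise_comparison_def R_def by blast+
  have xnn: "\<And>u. 0 \<le> x u" unfolding x_def by (rule polmass_nonneg[OF X])
  define P where "P = {u\<in>U c. 0 < x u}"
  have "P \<noteq> {}" using used_exists[OF X st, of c] unfolding P_def x_def by auto
  then obtain u0 where u0: "u0 \<in> P" "\<forall>u\<in>P. \<pi> u0 \<le> \<pi> u"
    using finite_argmin[of P \<pi>] unfolding P_def by auto
  have u0U: "u0 \<in> U c" and xu0: "0 < x u0" using u0 unfolding P_def by auto
  have best: "\<forall>v\<in>U c. \<pi> v \<le> \<pi> u0"
  proof (rule ccontr)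
    assume "\<not> ?thesis"
    then obtain v where v: "v \<in> U c" "\<pi> v > \<pi> u0" by auto
    have eq: "(\<Sum>u'\<in>U c. x u' * R u' u0) - x u0 * (\<Sum>u'\<in>U c. R u0 u') = 0"
      using rest_policy[OF st rp u0U] unfolding x_def R_def \<pi>_def by simp
    have "(\<Sum>u'\<in>U c. x u' * R u' u0) = 0"
    proof (intro sum.neutral ballI)
      fix u' assume u': "u' \<in> U c"
      show "x u' * R u' u0 = 0"
      proof (cases "x u' > 0")
        case True
        then have "\<pi> u0 \<le> \<pi> u'" using u0 u' unfolding P_def by auto
        then have "\<not> R u' u0 > 0" using Rpos[OF u' u0U] by simp
        then have "R u' u0 = 0" using Rnn[OF u' u0U] by simp
        then show ?thesis by simp
      next
        case False
        then show ?thesis using xnn[of u'] by simp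
      qed
    qed
    moreover have "(\<Sum>u'\<in>U c. R u0 u') \<ge> R u0 v"
      using v Rnn u0U by (intro member_le_sum) auto
    moreover have "R u0 v > 0" using Rpos[OF u0U v(1)] v by simp
    ultimately have "x u0 * (\<Sum>u'\<in>U c. R u0 u') > 0" using xu0 by simp
    then show False using eq \<open>(\<Sum>u'\<in>U c. x u' * R u' u0) = 0\<close> by linarith
  qed
  have opt: "\<And>u v. u \<in> U c \<Longrightarrow> x u > 0 \<Longrightarrow> v \<in> U c \<Longrightarrow> \<pi> v \<le> \<pi> u"
    using best u0 unfolding P_def by force
  have A: "\<forall>u\<in>U c. polmass S \<mu> c u > 0 \<longrightarrow> (\<forall>v\<in>U c. F c \<mu> u \<ge> F c \<mu> v)"
    using opt unfolding x_def \<pi>_def by blast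
  have Rzero: "\<And>u v. u \<in> U c \<Longrightarrow> x u > 0 \<Longrightarrow> v \<in> U c \<Longrightarrow> R u v = 0"
  proof -
    fix u v assume "u \<in> U c" "x u > 0" "v \<in> U c"
    then have "\<not> R u v > 0" using opt Rpos by force
    then show "R u v = 0" using Rnn \<open>u \<in> U c\<close> \<open>v \<in> U c\<close> by force
  qed
  have B: "\<forall>s\<in>S c. \<forall>u\<in>U c. fr S U F rho c s u \<mu> = 0"
  proof (intro ballI)
    fix s u assume s: "s \<in> S c" and u: "u \<in> U c"
    have mnn: "\<And>w. 0 \<le> \<mu> $ (c, s, w)" using popX_nonneg[OF X] by blast
    have pos: "\<And>w. \<mu> $ (c, s, w) > 0 \<Longrightarrow> x w > 0"
      using le_polmass[OF X s] unfolding x_def by (meson less_le_trans)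
    have t1: "(\<Sum>u'\<in>U c. \<mu> $ (c, s, u') * R u' u) = 0"
    proof (intro sum.neutral ballI)
      fix u' assume u': "u' \<in> U c"
      show "\<mu> $ (c, s, u') * R u' u = 0"
        using Rzero[OF u' _ u] pos[of u'] mnn[of u'] by (cases "\<mu> $ (c, s, u') > 0") auto
    qed
    have t2: "\<mu> $ (c, s, u) * (\<Sum>u'\<in>U c. R u u') = 0"
    proof (cases "\<mu> $ (c, s, u) > 0")
      case True
      then show ?thesis using Rzero[OF u pos[OF True]] by simp
    next
      case False then show ?thesis using mnn[of u] by simp
    qed
    show "fr S U F rho c s u \<mu> = 0"
      using t1 t2 unfolding fr_def R_def x_def \<pi>_def by simp
  qed
  show ?thesis using A B by blast
qed

lemma tau_pair:
  fixes \<tau> :: "('u \<Rightarrow> real) \<Rightarrow> 'u \<Rightarrow> real"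
  assumes fin: "finite U"
    and nn: "\<forall>p v. v \<in> U \<longrightarrow> 0 \<le> \<tau> p v"
    and lip: "\<forall>p q v. v \<in> U \<longrightarrow> \<bar>\<tau> p v - \<tau> q v\<bar> \<le> L * (\<Sum>w\<in>U. \<bar>p w - q w\<bar>)"
    and pos: "\<forall>p. (\<exists>v\<in>U. p v > 0) \<longrightarrow> (\<Sum>v\<in>U. \<tau> p v * p v) > 0"
    and k: "k \<in> U" and l: "l \<in> U" and kl: "k \<noteq> l"
    and pk: "p k = 0" and pl: "p l = 0" and np: "\<forall>v\<in>U. p v \<le> 0"
  shows "2 * \<tau> p l \<le> \<tau> p k"
proof (rule field_le_epsilon)
  fix e :: real assume e: "0 < e"
  define t where "t = e / (9 * (\<bar>L\<bar> + 1))"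
  have t: "t > 0" unfolding t_def using e by (simp add: add_pos_nonneg)
  have tL: "9 * \<bar>L\<bar> * t \<le> e"
  proof -
    have "9 * \<bar>L\<bar> * t \<le> 9 * (\<bar>L\<bar> + 1) * t" using t by (intro mult_right_mono) auto
    also have "\<dots> = e" unfolding t_def by (simp add: add_pos_nonneg)
    finally show ?thesis .
  qed
  define d where "d = (\<lambda>v. (if v = k then t else 0) - (if v = l then 2 * t else 0))"
  define q where "q = (\<lambda>v. p v + d v)"
  have qk: "q k > 0" unfolding q_def d_def using kl pk t by simp
  have "(\<Sum>v\<in>U. \<tau> q v * q v) > 0" using pos k qk by blast
  moreover have "(\<Sum>v\<in>U. \<tau> q v * q v) = (\<Sum>v\<in>U. \<tau> q v * p v) + t * \<tau> q k - 2 * t * \<tau> q l"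
  proof -
    have "(\<Sum>v\<in>U. \<tau> q v * q v) = (\<Sum>v\<in>U. \<tau> q v * p v) + (\<Sum>v\<in>U. (if v = k then t * \<tau> q k else 0))
        - (\<Sum>v\<in>U. (if v = l then 2 * t * \<tau> q l else 0))"
      unfolding q_def d_def sum_subtractf[symmetric] sum.distrib[symmetric]
      by (intro sum.cong refl) (auto simp: algebra_simps)
    then show ?thesis using k l fin by (simp add: sum.delta)
  qed
  moreover have "(\<Sum>v\<in>U. \<tau> q v * p v) \<le> 0"
    using nn np by (intro sum_nonpos) (simp add: mult_nonneg_nonpos)
  ultimately have "0 < t * \<tau> q k - 2 * t * \<tau> q l" by linarith
  then have "0 < t * (\<tau> q k - 2 * \<tau> q l)" by (simp add: right_diff_distrib mult.assoc mult.left_commute)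
  then have ineq: "2 * \<tau> q l < \<tau> q k" using t by (simp add: zero_less_mult_iff)
  have dist: "(\<Sum>w\<in>U. \<bar>q w - p w\<bar>) = 3 * t"
  proof -
    have "(\<Sum>w\<in>U. \<bar>q w - p w\<bar>) = (\<Sum>w\<in>U. (if w = k then t else 0) + (if w = l then 2 * t else 0))"
      unfolding q_def d_def using kl t by (intro sum.cong refl) auto
    also have "\<dots> = 3 * t" using k l fin by (simp add: sum.distrib sum.delta)
    finally show ?thesis .
  qed
  have "\<bar>\<tau> q k - \<tau> p k\<bar> \<le> L * (3 * t)" using lip k dist by metis
  moreover have "\<bar>\<tau> q l - \<tau> p l\<bar> \<le> L * (3 * t)" using lip l dist by metis
  moreover have "L * (3 * t) \<le> \<bar>L\<bar> * 3 * t" using t by (simp add: mult_right_mono)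
  ultimately show "2 * \<tau> p l \<le> \<tau> p k + e" using ineq tL by linarith
qed

lemma excess_ok:
  fixes S :: "'c::finite \<Rightarrow> 's::finite set" and U :: "'c \<Rightarrow> ('s \<Rightarrow> 'a::finite) set"
  assumes st: "standing S A phi U m Rd" and rp: "rest_point S A phi U m Rd F rho \<mu>"
    and ex: "excess_payoff (U c) (m c) (rho c)"
  shows "(\<forall>u\<in>U c. polmass S \<mu> c u > 0 \<longrightarrow> (\<forall>v\<in>U c. F c \<mu> u \<ge> F c \<mu> v))
       \<and> (\<forall>s\<in>S c. \<forall>u\<in>U c. fr S U F rho c s u \<mu> = 0)"
proof -
  have X: "\<mu> \<in> popX S U m" using rp unfolding rest_point_def by simp
  have mpos: "m c > 0" using st unfolding standing_def by auto
  define x where "x = polmass S \<mu> c"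
  define \<pi> where "\<pi> = F c \<mu>"
  have pd: "policy_distr (U c) (m c) x" unfolding x_def by (rule polmass_distr[OF X])
  have xnn: "\<And>u. 0 \<le> x u" unfolding x_def by (rule polmass_nonneg[OF X])
  have xsum: "(\<Sum>u\<in>U c. x u) = m c" using pd unfolding policy_distr_def by simp
  obtain \<tau> :: "(('s \<Rightarrow> 'a) \<Rightarrow> real) \<Rightarrow> ('s \<Rightarrow> 'a) \<Rightarrow> real" and L where
    nn: "\<forall>p v. v \<in> U c \<longrightarrow> 0 \<le> \<tau> p v"
    and lip: "\<forall>p q v. v \<in> U c \<longrightarrow> \<bar>\<tau> p v - \<tau> q v\<bar> \<le> L * (\<Sum>w\<in>U c. \<bar>p w - q w\<bar>)"
    and pos: "\<forall>p. (\<exists>v\<in>U c. p v > 0) \<longrightarrow> (\<Sum>v\<in>U c. \<tau> p v * p v) > 0"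
    and rh: "\<forall>\<pi> x u v. policy_distr (U c) (m c) x \<and> u \<in> U c \<and> v \<in> U c \<longrightarrow>
         rho c \<pi> x u v = \<tau> (\<lambda>w. \<pi> w - (\<Sum>w'\<in>U c. x w' * \<pi> w') / m c) v"
    using ex unfolding excess_payoff_def by blast
  define a where "a = (\<Sum>w'\<in>U c. x w' * \<pi> w') / m c"
  define p where "p = (\<lambda>w. \<pi> w - a)"
  define T where "T = (\<Sum>u'\<in>U c. \<tau> p u')"
  have R: "\<And>u v. u \<in> U c \<Longrightarrow> v \<in> U c \<Longrightarrow> rho c (F c \<mu>) (polmass S \<mu> c) u v = \<tau> p v"
    using rh pd unfolding p_def a_def x_def \<pi>_def by blast
  have Tnn: "T \<ge> 0" unfolding T_def using nn by (intro sum_nonneg) auto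
  have rest: "\<And>v. v \<in> U c \<Longrightarrow> m c * \<tau> p v = x v * T"
  proof -
    fix v assume v: "v \<in> U c"
    have "(\<Sum>u'\<in>U c. x u' * \<tau> p v) - x v * T = 0"
      using rest_policy[OF st rp v] R v unfolding x_def[symmetric] T_def by simp
    moreover have "(\<Sum>u'\<in>U c. x u' * \<tau> p v) = m c * \<tau> p v"
      using xsum by (simp add: sum_distrib_right[symmetric])
    ultimately show "m c * \<tau> p v = x v * T" by simp
  qed
  have xp0: "(\<Sum>v\<in>U c. x v * p v) = 0"
  proof -
    have "(\<Sum>v\<in>U c. x v * p v) = (\<Sum>v\<in>U c. x v * \<pi> v) - (\<Sum>v\<in>U c. x v) * a"
      unfolding p_def right_diff_distrib sum_subtractf sum_distrib_right by simp
    also have "\<dots> = 0" using xsum mpos unfolding a_def by simp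
    finally show ?thesis .
  qed
  have pnp: "\<forall>v\<in>U c. p v \<le> 0"
  proof (rule ccontr)
    assume "\<not> ?thesis"
    then obtain v0 where "v0 \<in> U c" "p v0 > 0" by (auto simp: not_le)
    then have "(\<Sum>v\<in>U c. \<tau> p v * p v) > 0" using pos by blast
    moreover have "m c * (\<Sum>v\<in>U c. \<tau> p v * p v) = T * (\<Sum>v\<in>U c. x v * p v)"
    proof -
      have "m c * (\<Sum>v\<in>U c. \<tau> p v * p v) = (\<Sum>v\<in>U c. (m c * \<tau> p v) * p v)"
        unfolding sum_distrib_left by (intro sum.cong refl) (simp only: mult.assoc)
      also have "\<dots> = (\<Sum>v\<in>U c. (x v * T) * p v)"
        using rest by (intro sum.cong refl) auto
      also have "\<dots> = T * (\<Sum>v\<in>U c. x v * p v)"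
        unfolding sum_distrib_left by (intro sum.cong refl) (simp only: mult.assoc mult.commute mult.left_commute)
      finally show ?thesis .
    qed
    ultimately show False using xp0 mpos by simp
  qed
  have used0: "\<And>u. u \<in> U c \<Longrightarrow> x u > 0 \<Longrightarrow> p u = 0"
  proof -
    fix u assume u: "u \<in> U c" "x u > 0"
    have nn1: "\<And>v. v \<in> U c \<Longrightarrow> - (x v * p v) \<ge> 0"
    proof -
      fix v assume "v \<in> U c"
      then have "p v \<le> 0" using pnp by blast
      then show "- (x v * p v) \<ge> 0" using xnn[of v] by (simp add: mult_nonneg_nonpos)
    qed
    have h: "(\<Sum>v\<in>U c. - (x v * p v)) = 0 \<longleftrightarrow> (\<forall>v\<in>U c. - (x v * p v) = 0)"
      by (rule sum_nonneg_eq_0_iff[OF _ nn1]) simp_all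
    moreover have "(\<Sum>v\<in>U c. - (x v * p v)) = 0" using xp0 by (simp add: sum_negf)
    ultimately have "\<forall>v\<in>U c. - (x v * p v) = 0" by blast
    then show "p u = 0" using u by fastforce
  qed
  have A: "\<forall>u\<in>U c. polmass S \<mu> c u > 0 \<longrightarrow> (\<forall>v\<in>U c. F c \<mu> u \<ge> F c \<mu> v)"
  proof (intro ballI impI)
    fix u v assume u: "u \<in> U c" "polmass S \<mu> c u > 0" and v: "v \<in> U c"
    have "p u = 0" using used0 u unfolding x_def by simp
    moreover have "p v \<le> 0" using pnp v by simp
    ultimately show "F c \<mu> u \<ge> F c \<mu> v" unfolding p_def \<pi>_def by simp
  qed
  have off0: "\<And>j. j \<in> U c \<Longrightarrow> p j \<noteq> 0 \<Longrightarrow> \<tau> p j = 0"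
  proof -
    fix j assume j: "j \<in> U c" "p j \<noteq> 0"
    then have "x j = 0" using used0 xnn[of j] by force
    then show "\<tau> p j = 0" using rest[OF j(1)] mpos by simp
  qed
  have B: "\<forall>s\<in>S c. \<forall>u\<in>U c. fr S U F rho c s u \<mu> = 0"
  proof (intro ballI)
    fix s u assume s: "s \<in> S c" and u: "u \<in> U c"
    have frE: "fr S U F rho c s u \<mu> = (\<Sum>u'\<in>U c. \<mu> $ (c, s, u')) * \<tau> p u - \<mu> $ (c, s, u) * T"
      unfolding fr_def T_def using R u by (simp add: sum_distrib_right)
    show "fr S U F rho c s u \<mu> = 0"
    proof (cases "T = 0")
      case True
      then have "\<forall>v\<in>U c. \<tau> p v = 0" using nn sum_nonneg_eq_0_iff[of "U c" "\<tau> p"] unfolding T_def by auto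
      then show ?thesis using frE True u by simp
    next
      case False
      have "\<exists>k\<in>U c. \<tau> p k \<noteq> 0"
      proof (rule ccontr)
        assume "\<not> (\<exists>k\<in>U c. \<tau> p k \<noteq> 0)"
        then have "T = 0" unfolding T_def by (intro sum.neutral) blast
        then show False using False by simp
      qed
      then obtain k where k: "k \<in> U c" "\<tau> p k \<noteq> 0" by blast
      have pk: "p k = 0" using off0 k by blast
      have others: "\<And>l. l \<in> U c \<Longrightarrow> l \<noteq> k \<Longrightarrow> \<tau> p l = 0"
      proof -
        fix l assume l: "l \<in> U c" "l \<noteq> k"
        show "\<tau> p l = 0"
        proof (cases "p l = 0")
          case True
          have "2 * \<tau> p l \<le> \<tau> p k" using tau_pair[OF _ nn lip pos k(1) l(1) _ pk True pnp] l by auto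
          moreover have "2 * \<tau> p k \<le> \<tau> p l" using tau_pair[OF _ nn lip pos l(1) k(1) _ True pk pnp] l by auto
          moreover have "0 \<le> \<tau> p k" "0 \<le> \<tau> p l" using nn k l by auto
          ultimately show ?thesis by linarith
        next
          case False then show ?thesis using off0 l by blast
        qed
      qed
      have Tk: "T = \<tau> p k"
      proof -
        have "T = (\<Sum>u'\<in>U c. if u' = k then \<tau> p k else 0)"
          unfolding T_def using others by (intro sum.cong refl) auto
        then show ?thesis using k by (simp add: sum.delta)
      qed
      have xl: "\<And>l. l \<in> U c \<Longrightarrow> l \<noteq> k \<Longrightarrow> \<mu> $ (c, s, l) = 0"
      proof -
        fix l assume l: "l \<in> U c" "l \<noteq> k"
        have "x l * T = 0" using rest[OF l(1)] others[OF l] by simp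
        then have "x l = 0" using False by simp
        then show "\<mu> $ (c, s, l) = 0" using polmass_zero[OF X s] unfolding x_def by blast
      qed
      have sumk: "(\<Sum>u'\<in>U c. \<mu> $ (c, s, u')) = \<mu> $ (c, s, k)"
      proof -
        have "(\<Sum>u'\<in>U c. \<mu> $ (c, s, u')) = (\<Sum>u'\<in>U c. if u' = k then \<mu> $ (c, s, k) else 0)"
          using xl by (intro sum.cong refl) auto
        then show ?thesis using k by (simp add: sum.delta)
      qed
      show ?thesis
      proof (cases "u = k")
        case True then show ?thesis using frE sumk Tk by simp
      next
        case False then show ?thesis using frE others[OF u False] xl[OF u False] by simp
      qed
    qed
  qed
  show ?thesis using A B by blast
qed

definition imit_phi where
  "imit_phi U M rho (\<phi> :: real \<Rightarrow> real) L \<longleftrightarrow> (\<forall>a b. \<bar>\<phi> a - \<phi> b\<bar> \<le> L * \<bar>a - b\<bar>)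
     \<and> (\<forall>d\<le>0. \<phi> d = 0) \<and> (\<forall>d>0. \<phi> d > 0)
     \<and> (\<forall>\<pi> x u v. policy_distr U M x \<and> u \<in> U \<and> v \<in> U \<longrightarrow> rho \<pi> x u v = x v / M * \<phi> (\<pi> v - \<pi> u))"

lemma imit_phi_ex:
  assumes "imitative_via_comparison U M rho"
  shows "\<exists>\<phi> L. imit_phi U M rho \<phi> L"
proof -
  obtain \<phi> :: "real \<Rightarrow> real" and L where a: "\<forall>a b. \<bar>\<phi> a - \<phi> b\<bar> \<le> L * \<bar>a - b\<bar>"
    "\<forall>d\<le>0. \<phi> d = 0" "\<forall>d>0. \<phi> d > 0" "imitative U M (\<lambda>\<pi> x u v. \<phi> (\<pi> v - \<pi> u)) rho"
    using assms unfolding imitative_via_comparison_def by blast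
  have "\<forall>\<pi> x u v. policy_distr U M x \<and> u \<in> U \<and> v \<in> U \<longrightarrow> rho \<pi> x u v = x v / M * \<phi> (\<pi> v - \<pi> u)"
    using a(4) unfolding imitative_def by blast
  then have "imit_phi U M rho \<phi> L" using a(1-3) unfolding imit_phi_def by blast
  then show ?thesis by blast
qed

lemma imit_phi_nonneg: "imit_phi U M rho \<phi> L \<Longrightarrow> 0 \<le> \<phi> d"
  unfolding imit_phi_def by (cases "d \<le> 0") (auto intro: less_imp_le)

lemma imit_phi_le: "imit_phi U M rho \<phi> L \<Longrightarrow> \<phi> d \<le> \<bar>L\<bar> * \<bar>d\<bar>"
proof -
  assume a: "imit_phi U M rho \<phi> L"
  then have "\<bar>\<phi> d - \<phi> 0\<bar> \<le> L * \<bar>d - 0\<bar>" unfolding imit_phi_def by blast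
  moreover have "\<phi> 0 = 0" using a unfolding imit_phi_def by auto
  moreover have "L * \<bar>d\<bar> \<le> \<bar>L\<bar> * \<bar>d\<bar>" by (simp add: mult_right_mono)
  ultimately show ?thesis by simp
qed

lemma imit_dx:
  assumes st: "standing S A phi U m Rd" and X: "\<mu> \<in> popX S U m"
    and ip: "imit_phi (U c) (m c) (rho c) \<phi> L" and v: "v \<in> U c"
  shows "(\<Sum>s\<in>S c. field S A phi U Rd F rho \<mu> $ (c, s, v)) =
    polmass S \<mu> c v / m c * (\<Sum>u'\<in>U c. polmass S \<mu> c u' * (\<phi> (F c \<mu> v - F c \<mu> u') - \<phi> (F c \<mu> u' - F c \<mu> v)))"
proof -
  define x where "x = polmass S \<mu> c"
  define \<pi> where "\<pi> = F c \<mu>"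
  have pd: "policy_distr (U c) (m c) x" unfolding x_def by (rule polmass_distr[OF X])
  have R: "\<And>u w. u \<in> U c \<Longrightarrow> w \<in> U c \<Longrightarrow> rho c \<pi> x u w = x w / m c * \<phi> (\<pi> w - \<pi> u)"
    using ip pd unfolding imit_phi_def by blast
  have "(\<Sum>s\<in>S c. field S A phi U Rd F rho \<mu> $ (c, s, v)) =
     (\<Sum>u'\<in>U c. x u' * rho c \<pi> x u' v) - x v * (\<Sum>u'\<in>U c. rho c \<pi> x v u')"
    using sum_field[OF st v, of F rho \<mu>] unfolding x_def \<pi>_def by simp
  also have "\<dots> = (\<Sum>u'\<in>U c. x u' * (x v / m c * \<phi> (\<pi> v - \<pi> u'))) - x v * (\<Sum>u'\<in>U c. x u' / m c * \<phi> (\<pi> u' - \<pi> v))"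
    using R v by simp
  also have "\<dots> = x v / m c * (\<Sum>u'\<in>U c. x u' * (\<phi> (\<pi> v - \<pi> u') - \<phi> (\<pi> u' - \<pi> v)))"
    unfolding sum_distrib_left sum_subtractf[symmetric]
    by (intro sum.cong refl) (simp add: algebra_simps)
  finally show ?thesis unfolding x_def \<pi>_def .
qed

lemma imit_ok:
  assumes st: "standing S A phi U m Rd" and rp: "rest_point S A phi U m Rd F rho \<mu>"
    and ip: "imit_phi (U c) (m c) (rho c) \<phi> L"
  shows "(\<forall>u\<in>U c. \<forall>w\<in>U c. polmass S \<mu> c u > 0 \<longrightarrow> polmass S \<mu> c w > 0 \<longrightarrow> F c \<mu> u = F c \<mu> w)
       \<and> (\<forall>s\<in>S c. \<forall>u\<in>U c. fr S U F rho c s u \<mu> = 0)"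
proof -
  have X: "\<mu> \<in> popX S U m" using rp unfolding rest_point_def by simp
  have mpos: "m c > 0" using st unfolding standing_def by auto
  define x where "x = polmass S \<mu> c"
  define \<pi> where "\<pi> = F c \<mu>"
  have pd: "policy_distr (U c) (m c) x" unfolding x_def by (rule polmass_distr[OF X])
  have xnn: "\<And>u. 0 \<le> x u" unfolding x_def by (rule polmass_nonneg[OF X])
  have R: "\<And>u w. u \<in> U c \<Longrightarrow> w \<in> U c \<Longrightarrow> rho c \<pi> x u w = x w / m c * \<phi> (\<pi> w - \<pi> u)"
    using ip pd unfolding imit_phi_def by blast
  have phinn: "\<And>d. 0 \<le> \<phi> d" using imit_phi_nonneg[OF ip] .
  have phi0: "\<And>d. d \<le> 0 \<Longrightarrow> \<phi> d = 0" and phipos: "\<And>d. d > 0 \<Longrightarrow> \<phi> d > 0"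
    using ip unfolding imit_phi_def by auto
  define P where "P = {u\<in>U c. 0 < x u}"
  have "P \<noteq> {}" using used_exists[OF X st, of c] unfolding P_def x_def by auto
  then obtain u0 where u0: "u0 \<in> P" "\<forall>u\<in>P. \<pi> u \<le> \<pi> u0"
    using finite_argmax[of P \<pi>] unfolding P_def by auto
  have u0U: "u0 \<in> U c" and xu0: "0 < x u0" using u0 unfolding P_def by auto
  have eq: "(\<Sum>u'\<in>U c. x u' * rho c \<pi> x u' u0) - x u0 * (\<Sum>u'\<in>U c. rho c \<pi> x u0 u') = 0"
    using rest_policy[OF st rp u0U] unfolding x_def \<pi>_def by simp
  have s2: "(\<Sum>u'\<in>U c. rho c \<pi> x u0 u') = 0"
  proof (intro sum.neutral ballI)
    fix u' assume u': "u' \<in> U c"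
    show "rho c \<pi> x u0 u' = 0"
    proof (cases "x u' > 0")
      case True
      then have "\<pi> u' \<le> \<pi> u0" using u0 u' unfolding P_def by auto
      then show ?thesis using R[OF u0U u'] phi0[of "\<pi> u' - \<pi> u0"] by simp
    next
      case False
      then have "x u' = 0" using xnn[of u'] by simp
      then show ?thesis using R[OF u0U u'] by simp
    qed
  qed
  have s1: "(\<Sum>u'\<in>U c. x u' * rho c \<pi> x u' u0) = 0" using eq s2 by simp
  have t1nn: "\<And>u'. u' \<in> U c \<Longrightarrow> 0 \<le> x u' * rho c \<pi> x u' u0"
    using R u0U xnn phinn mpos by simp
  have all0: "\<forall>u'\<in>U c. x u' * rho c \<pi> x u' u0 = 0"
  proof -
    have "(\<Sum>u'\<in>U c. x u' * rho c \<pi> x u' u0) = 0 \<longleftrightarrow> (\<forall>u'\<in>U c. x u' * rho c \<pi> x u' u0 = 0)"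
      by (rule sum_nonneg_eq_0_iff[OF _ t1nn]) simp_all
    then show ?thesis using s1 by blast
  qed
  have eqpay: "\<And>w. w \<in> U c \<Longrightarrow> x w > 0 \<Longrightarrow> \<pi> w = \<pi> u0"
  proof -
    fix w assume w: "w \<in> U c" "x w > 0"
    have "x w * rho c \<pi> x w u0 = 0" using all0 w by blast
    then have "x w * (x u0 / m c * \<phi> (\<pi> u0 - \<pi> w)) = 0" using R[OF w(1) u0U] by simp
    then have "\<phi> (\<pi> u0 - \<pi> w) = 0" using w xu0 mpos by simp
    then have "\<pi> u0 - \<pi> w \<le> 0" using phipos[of "\<pi> u0 - \<pi> w"] by force
    moreover have "\<pi> w \<le> \<pi> u0" using u0 w unfolding P_def by auto
    ultimately show "\<pi> w = \<pi> u0" by simp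
  qed
  have A: "\<forall>u\<in>U c. \<forall>w\<in>U c. polmass S \<mu> c u > 0 \<longrightarrow> polmass S \<mu> c w > 0 \<longrightarrow> F c \<mu> u = F c \<mu> w"
    using eqpay unfolding x_def \<pi>_def by metis
  have B: "\<forall>s\<in>S c. \<forall>u\<in>U c. fr S U F rho c s u \<mu> = 0"
  proof (intro ballI)
    fix s u assume s: "s \<in> S c" and u: "u \<in> U c"
    have mnn: "\<And>w. 0 \<le> \<mu> $ (c, s, w)" using popX_nonneg[OF X] by blast
    have pos: "\<And>w. \<mu> $ (c, s, w) > 0 \<Longrightarrow> x w > 0"
      using le_polmass[OF X s] unfolding x_def by (meson less_le_trans)
    have t1: "(\<Sum>u'\<in>U c. \<mu> $ (c, s, u') * rho c \<pi> x u' u) = 0"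
    proof (intro sum.neutral ballI)
      fix u' assume u': "u' \<in> U c"
      show "\<mu> $ (c, s, u') * rho c \<pi> x u' u = 0"
      proof (cases "\<mu> $ (c, s, u') > 0 \<and> x u > 0")
        case True
        then have "\<pi> u = \<pi> u'" using eqpay[OF u] eqpay[OF u'] pos by auto
        then show ?thesis using R[OF u' u] phi0[of 0] by simp
      next
        case False
        then have "\<mu> $ (c, s, u') = 0 \<or> x u = 0" using mnn[of u'] xnn[of u] by auto
        then show ?thesis using R[OF u' u] by auto
      qed
    qed
    have t2: "\<mu> $ (c, s, u) * (\<Sum>u'\<in>U c. rho c \<pi> x u u') = 0"
    proof (cases "\<mu> $ (c, s, u) > 0")
      case True
      have "(\<Sum>u'\<in>U c. rho c \<pi> x u u') = 0"
      proof (intro sum.neutral ballI)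
        fix u' assume u': "u' \<in> U c"
        show "rho c \<pi> x u u' = 0"
        proof (cases "x u' > 0")
          case True
          then have "\<pi> u = \<pi> u'" using eqpay[OF u] eqpay[OF u'] pos \<open>\<mu> $ (c, s, u) > 0\<close> by auto
          then show ?thesis using R[OF u u'] phi0[of 0] by simp
        next
          case False
          then have "x u' = 0" using xnn[of u'] by simp
          then show ?thesis using R[OF u u'] by simp
        qed
      qed
      then show ?thesis by simp
    next
      case False then show ?thesis using mnn[of u] by simp
    qed
    show "fr S U F rho c s u \<mu> = 0"
      using t1 t2 unfolding fr_def x_def \<pi>_def by simp
  qed
  show ?thesis using A B by blast
qed

lemma deriv_mono_interval:
  fixes f f' :: "real \<Rightarrow> real"
  assumes ab: "a \<le> b"
    and d: "\<And>t. a \<le> t \<Longrightarrow> t \<le> b \<Longrightarrow> (f has_real_derivative f' t) (at t within {a..b})"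
    and nn: "\<And>t. a \<le> t \<Longrightarrow> t \<le> b \<Longrightarrow> 0 \<le> f' t"
  shows "f a \<le> f b"
proof -
  have "\<exists>\<xi>\<in>{a..b}. f b - f a = (\<lambda>t. (*) (f' t)) \<xi> (b - a)"
    by (rule mvt_very_simple[OF ab]) (use d in \<open>auto simp: has_field_derivative_def\<close>)
  then obtain \<xi> where "\<xi> \<in> {a..b}" "f b - f a = f' \<xi> * (b - a)" by auto
  moreover have "0 \<le> f' \<xi> * (b - a)" using nn \<open>\<xi> \<in> {a..b}\<close> ab by auto
  ultimately show ?thesis by simp
qed

lemma sol_deriv:
  assumes sol: "is_solution S A phi U m Rd F rho x" and t: "t \<ge> 0"
  shows "((\<lambda>t. polmass S (x t) c v) has_real_derivative
           (\<Sum>s\<in>S c. field S A phi U Rd F rho (x t) $ (c, s, v))) (at t within {0..})"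
proof -
  have xd: "(x has_vector_derivative field S A phi U Rd F rho (x t)) (at t within {0..})"
    using sol t unfolding is_solution_def by blast
  have "\<And>s. ((\<lambda>t. x t $ (c, s, v)) has_vector_derivative field S A phi U Rd F rho (x t) $ (c, s, v)) (at t within {0..})"
    by (rule bounded_linear.has_vector_derivative[OF bounded_linear_vec_nth xd])
  then have "((\<lambda>t. \<Sum>s\<in>S c. x t $ (c, s, v)) has_vector_derivative (\<Sum>s\<in>S c. field S A phi U Rd F rho (x t) $ (c, s, v))) (at t within {0..})"
    by (rule has_vector_derivative_sum)
  then show ?thesis unfolding polmass_def has_real_derivative_iff_has_vector_derivative .
qed

lemma sol_cont:
  assumes sol: "is_solution S A phi U m Rd F rho x"
  shows "continuous_on {0..} x"
proof -
  have "continuous (at t within {0..}) x" if "t \<in> {0..}" for t :: real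
  proof -
  have "(x has_vector_derivative field S A phi U Rd F rho (x t)) (at t within {0..})"
    using sol that unfolding is_solution_def by auto
  then show "continuous (at t within {0..}) x" by (rule has_vector_derivative_continuous)
  qed
  then show ?thesis using continuous_on_eq_continuous_within by blast
qed

lemma sol_X: "is_solution S A phi U m Rd F rho x \<Longrightarrow> t \<ge> 0 \<Longrightarrow> x t \<in> popX S U m"
  unfolding is_solution_def by simp

lemma F_cont:
  assumes C1: "C1_near_X S U m F" and w: "w \<in> U c"
  shows "\<exists>N. open N \<and> popX S U m \<subseteq> N \<and> continuous_on N (\<lambda>\<mu>. F c \<mu> w)"
proof -
  from C1 obtain N where N: "open N" "popX S U m \<subseteq> N" and
    h: "\<forall>c. \<forall>u\<in>U c. \<exists>F'. (\<forall>y\<in>N. ((\<lambda>\<mu>. F c \<mu> u) has_derivative F' y) (at y))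
                     \<and> (\<forall>v. continuous_on N (\<lambda>y. F' y v))"
    unfolding C1_near_X_def by auto
  have "\<exists>F'. (\<forall>y\<in>N. ((\<lambda>\<mu>. F c \<mu> w) has_derivative F' y) (at y))
                     \<and> (\<forall>v. continuous_on N (\<lambda>y. F' y v))" using h w by simp
  then obtain F' where F': "\<forall>y\<in>N. ((\<lambda>\<mu>. F c \<mu> w) has_derivative F' y) (at y)" by auto
  have "continuous_on N (\<lambda>\<mu>. F c \<mu> w)"
  proof (rule continuous_at_imp_continuous_on, rule ballI)
    fix y assume "y \<in> N"
    then have "((\<lambda>\<mu>. F c \<mu> w) has_derivative F' y) (at y)" using F' by simp
    then show "isCont (\<lambda>\<mu>. F c \<mu> w) y" by (rule has_derivative_continuous)
  qed
  then show ?thesis using N by auto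
qed

lemma F_isCont:
  assumes C1: "C1_near_X S U m F" and w: "w \<in> U c" and X: "\<mu> \<in> popX S U m"
  shows "isCont (\<lambda>\<mu>. F c \<mu> w) \<mu>"
proof -
  obtain N where N: "open N" "popX S U m \<subseteq> N" "continuous_on N (\<lambda>\<mu>. F c \<mu> w)"
    using F_cont[OF C1 w] by blast
  then show ?thesis using X by (meson continuous_on_eq_continuous_at subsetD)
qed

lemma F_traj_cont:
  assumes C1: "C1_near_X S U m F" and w: "w \<in> U c" and sol: "is_solution S A phi U m Rd F rho x"
  shows "continuous_on {0..t0} (\<lambda>t. F c (x t) w)"
proof -
  obtain N where N: "open N" "popX S U m \<subseteq> N" "continuous_on N (\<lambda>\<mu>. F c \<mu> w)"
    using F_cont[OF C1 w] by blast
  have "continuous_on {0..t0} x" using sol_cont[OF sol] by (rule continuous_on_subset) auto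
  moreover have "x ` {0..t0} \<subseteq> N" using sol_X[OF sol] N(2) by auto
  ultimately show ?thesis using continuous_on_compose2[OF N(3)] by blast
qed

lemma polmass_le_m:
  assumes "\<mu> \<in> popX S U m" "v \<in> U c"
  shows "polmass S \<mu> c v \<le> m c"
proof -
  have "polmass S \<mu> c v \<le> (\<Sum>u\<in>U c. polmass S \<mu> c u)"
    using assms by (intro member_le_sum polmass_nonneg) auto
  also have "\<dots> = m c" using polmass_distr[OF assms(1), of c] unfolding policy_distr_def by simp
  finally show ?thesis .
qed

lemma escape:
  assumes sol: "is_solution S A phi U m Rd F rho x" and T: "T \<ge> 0" and v: "v \<in> U c"
    and k: "k > 0"
    and grow: "\<forall>\<mu>\<in>popX S U m. dist \<mu> \<mu>s < r \<longrightarrow>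
                 k * polmass S \<mu> c v \<le> (\<Sum>s\<in>S c. field S A phi U Rd F rho \<mu> $ (c, s, v))"
    and pos: "polmass S (x T) c v > 0"
  shows "\<exists>t\<ge>T. dist (x t) \<mu>s \<ge> r"
proof (rule ccontr)
  assume "\<not> ?thesis"
  then have near: "\<And>t. t \<ge> T \<Longrightarrow> dist (x t) \<mu>s < r" by (meson not_le)
  define y where "y = (\<lambda>t. polmass S (x t) c v)"
  define y' where "y' = (\<lambda>t. \<Sum>s\<in>S c. field S A phi U Rd F rho (x t) $ (c, s, v))"
  have dy: "\<And>t a b. 0 \<le> a \<Longrightarrow> a \<le> t \<Longrightarrow> (y has_real_derivative y' t) (at t within {a..b})"
  proof -
    fix t a b :: real assume "0 \<le> a" "a \<le> t"
    then have "(y has_real_derivative y' t) (at t within {0..})"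
      unfolding y_def y'_def by (intro sol_deriv[OF sol]) simp
    then show "(y has_real_derivative y' t) (at t within {a..b})"
      by (rule DERIV_subset) (use \<open>0 \<le> a\<close> in auto)
  qed
  have Xt: "\<And>t. t \<ge> 0 \<Longrightarrow> x t \<in> popX S U m" using sol_X[OF sol] by blast
  have ynn: "\<And>t. t \<ge> 0 \<Longrightarrow> 0 \<le> y t" unfolding y_def using Xt polmass_nonneg by blast
  have yle: "\<And>t. t \<ge> 0 \<Longrightarrow> y t \<le> m c" unfolding y_def using Xt polmass_le_m v by blast
  have gr: "\<And>t. t \<ge> T \<Longrightarrow> k * y t \<le> y' t"
    unfolding y_def y'_def using grow Xt near T by auto
  have mono: "\<And>t. t \<ge> T \<Longrightarrow> y T \<le> y t"
  proof -
    fix t assume t: "t \<ge> T"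
    show "y T \<le> y t"
    proof (rule deriv_mono_interval[OF t])
      fix s assume "T \<le> s" "s \<le> t"
      then show "(y has_real_derivative y' s) (at s within {T..t})" using dy T by auto
      show "0 \<le> y' s" using gr[of s] ynn[of s] k \<open>T \<le> s\<close> T by (smt (verit) mult_nonneg_nonneg)
    qed
  qed
  have lin: "\<And>t. t \<ge> T \<Longrightarrow> y T + k * y T * (t - T) \<le> y t"
  proof -
    fix t assume t: "t \<ge> T"
    define z where "z = (\<lambda>t. y t - k * y T * t)"
    have "z T \<le> z t"
    proof (rule deriv_mono_interval[OF t, where f' = "\<lambda>s. y' s - k * y T"])
      fix s assume s: "T \<le> s" "s \<le> t"
      have "(y has_real_derivative y' s) (at s within {T..t})" using dy T s by auto
      then show "(z has_real_derivative y' s - k * y T) (at s within {T..t})"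
        unfolding z_def by (auto intro!: derivative_eq_intros)
      have "k * y T \<le> k * y s" using mono[of s] s k by (simp add: mult_left_mono)
      then show "0 \<le> y' s - k * y T" using gr[of s] s by simp
    qed
    then show "y T + k * y T * (t - T) \<le> y t" unfolding z_def by (simp add: algebra_simps)
  qed
  define t1 where "t1 = T + m c / (k * y T) + 1"
  have kyT: "k * y T > 0" using k pos unfolding y_def by simp
  have t1T: "t1 \<ge> T" unfolding t1_def using kyT yle[OF T] pos unfolding y_def
    by (smt (verit) divide_nonneg_pos)
  have yTp: "y T > 0" using pos unfolding y_def by simp
  have "k * y T * (t1 - T) = k * y T * (m c / (k * y T)) + k * y T" unfolding t1_def by (simp add: algebra_simps)
  also have "\<dots> = m c + k * y T" using k yTp by simp
  finally have "k * y T * (t1 - T) = m c + k * y T" .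
  then have "y t1 \<ge> y T + m c + k * y T" using lin[OF t1T] by simp
  moreover have "y t1 \<le> m c" using yle t1T T by simp
  ultimately show False using kyT pos unfolding y_def by simp
qed

lemma stays_pos:
  assumes st: "standing S A phi U m Rd" and C1: "C1_near_X S U m F"
    and sol: "is_solution S A phi U m Rd F rho x"
    and ip: "imit_phi (U c) (m c) (rho c) \<phi> L" and v: "v \<in> U c"
    and p0: "polmass S (x 0) c v > 0" and t0: "t0 \<ge> 0"
  shows "polmass S (x t0) c v > 0"
proof -
  have mpos: "m c > 0" using st unfolding standing_def by auto
  define G where "G = (\<lambda>t. \<Sum>w\<in>U c. \<bar>F c (x t) w\<bar>)"
  have Gc: "continuous_on {0..t0} G"
    unfolding G_def by (intro continuous_on_sum continuous_on_rabs F_traj_cont[OF C1 _ sol]) auto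
  obtain tm where "tm \<in> {0..t0}" and tm: "\<forall>t\<in>{0..t0}. G t \<le> G tm"
    using continuous_attains_sup[OF compact_Icc _ Gc] t0 by auto
  define K where "K = \<bar>L\<bar> * (1 + real (card (U c))) * G tm"
  have Gnn: "\<And>t. 0 \<le> G t" unfolding G_def by (intro sum_nonneg) auto
  have Knn: "0 \<le> K" unfolding K_def using Gnn by simp
  define y where "y = (\<lambda>t. polmass S (x t) c v)"
  define y' where "y' = (\<lambda>t. \<Sum>s\<in>S c. field S A phi U Rd F rho (x t) $ (c, s, v))"
  have Xt: "\<And>t. t \<ge> 0 \<Longrightarrow> x t \<in> popX S U m" using sol_X[OF sol] by blast
  have ynn: "\<And>t. t \<ge> 0 \<Longrightarrow> 0 \<le> y t" unfolding y_def using Xt polmass_nonneg by blast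
  have phinn: "\<And>d. 0 \<le> \<phi> d" using imit_phi_nonneg[OF ip] .
  have lowb: "\<And>t. 0 \<le> t \<Longrightarrow> t \<le> t0 \<Longrightarrow> - K * y t \<le> y' t"
  proof -
    fix t assume t: "0 \<le> t" "t \<le> t0"
    define xx where "xx = polmass S (x t) c"
    define \<pi> where "\<pi> = F c (x t)"
    have X: "x t \<in> popX S U m" using Xt t by simp
    have xnn: "\<And>u. 0 \<le> xx u" unfolding xx_def using polmass_nonneg[OF X] .
    have xle: "\<And>u. u \<in> U c \<Longrightarrow> xx u \<le> m c"
    proof -
      fix u assume u: "u \<in> U c"
      have "xx u \<le> (\<Sum>w\<in>U c. xx w)" using u xnn by (intro member_le_sum) auto
      also have "\<dots> = m c" using polmass_distr[OF X, of c] unfolding policy_distr_def xx_def by simp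
      finally show "xx u \<le> m c" .
    qed
    have eq: "y' t = xx v / m c * (\<Sum>u'\<in>U c. xx u' * (\<phi> (\<pi> v - \<pi> u') - \<phi> (\<pi> u' - \<pi> v)))"
      unfolding y'_def xx_def \<pi>_def by (rule imit_dx[where S=S and U=U and c=c and rho=rho and F=F and A=A and phi=phi and Rd=Rd and m=m, OF st X ip v])
    have sumsplit: "(\<Sum>u'\<in>U c. xx u' * (\<phi> (\<pi> v - \<pi> u') - \<phi> (\<pi> u' - \<pi> v)))
        = (\<Sum>u'\<in>U c. xx u' * \<phi> (\<pi> v - \<pi> u')) - (\<Sum>u'\<in>U c. xx u' * \<phi> (\<pi> u' - \<pi> v))"
      by (simp add: right_diff_distrib sum_subtractf)
    have A: "0 \<le> (\<Sum>u'\<in>U c. xx u' * \<phi> (\<pi> v - \<pi> u'))" using xnn phinn by (intro sum_nonneg) simp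
    have Gt: "(\<Sum>w\<in>U c. \<bar>\<pi> w\<bar>) \<le> G tm" using tm t unfolding G_def \<pi>_def by auto
    have piv: "\<bar>\<pi> v\<bar> \<le> (\<Sum>w\<in>U c. \<bar>\<pi> w\<bar>)" using v by (intro member_le_sum) auto
    have B: "(\<Sum>u'\<in>U c. xx u' * \<phi> (\<pi> u' - \<pi> v)) \<le> m c * K"
    proof -
      have "(\<Sum>u'\<in>U c. xx u' * \<phi> (\<pi> u' - \<pi> v)) \<le> (\<Sum>u'\<in>U c. m c * (\<bar>L\<bar> * (\<bar>\<pi> u'\<bar> + \<bar>\<pi> v\<bar>)))"
      proof (rule sum_mono)
        fix u' assume u': "u' \<in> U c"
        have "\<phi> (\<pi> u' - \<pi> v) \<le> \<bar>L\<bar> * \<bar>\<pi> u' - \<pi> v\<bar>" by (rule imit_phi_le[OF ip])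
        also have "\<dots> \<le> \<bar>L\<bar> * (\<bar>\<pi> u'\<bar> + \<bar>\<pi> v\<bar>)" by (intro mult_left_mono) auto
        finally have "\<phi> (\<pi> u' - \<pi> v) \<le> \<bar>L\<bar> * (\<bar>\<pi> u'\<bar> + \<bar>\<pi> v\<bar>)" .
        then show "xx u' * \<phi> (\<pi> u' - \<pi> v) \<le> m c * (\<bar>L\<bar> * (\<bar>\<pi> u'\<bar> + \<bar>\<pi> v\<bar>))"
          using xle[OF u'] xnn[of u'] phinn by (intro mult_mono) auto
      qed
      also have "\<dots> = m c * \<bar>L\<bar> * ((\<Sum>w\<in>U c. \<bar>\<pi> w\<bar>) + real (card (U c)) * \<bar>\<pi> v\<bar>)"
        by (simp add: sum_distrib_left sum.distrib algebra_simps)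
      also have "\<dots> \<le> m c * \<bar>L\<bar> * (G tm + real (card (U c)) * G tm)"
        using mpos Gt piv by (intro mult_left_mono add_mono mult_left_mono) auto
      also have "\<dots> = m c * K" unfolding K_def by (simp add: algebra_simps)
      finally show ?thesis .
    qed
    have "y' t \<ge> - (xx v / m c) * (m c * K)"
    proof -
      have "y' t = xx v / m c * (\<Sum>u'\<in>U c. xx u' * \<phi> (\<pi> v - \<pi> u')) - xx v / m c * (\<Sum>u'\<in>U c. xx u' * \<phi> (\<pi> u' - \<pi> v))"
        using eq sumsplit by (simp add: right_diff_distrib diff_divide_distrib)
      moreover have "0 \<le> xx v / m c * (\<Sum>u'\<in>U c. xx u' * \<phi> (\<pi> v - \<pi> u'))"
        using A xnn mpos by simp
      moreover have "xx v / m c * (\<Sum>u'\<in>U c. xx u' * \<phi> (\<pi> u' - \<pi> v)) \<le> xx v / m c * (m c * K)"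
        using B xnn mpos by (intro mult_left_mono) auto
      ultimately show ?thesis by linarith
    qed
    then show "- K * y t \<le> y' t" unfolding y_def xx_def using mpos by (simp add: mult.commute)
  qed
  define h where "h = (\<lambda>t. y t * exp (K * t))"
  have "h 0 \<le> h t0"
  proof (rule deriv_mono_interval[OF t0, where f' = "\<lambda>t. y' t * exp (K * t) + y t * (exp (K * t) * K)"])
    fix t assume t: "0 \<le> t" "t \<le> t0"
    have "(y has_real_derivative y' t) (at t within {0..})"
      unfolding y_def y'_def by (rule sol_deriv[OF sol t(1)])
    then have "(y has_real_derivative y' t) (at t within {0..t0})"
      by (rule DERIV_subset) auto
    then show "(h has_real_derivative y' t * exp (K * t) + y t * (exp (K * t) * K)) (at t within {0..t0})"
      unfolding h_def by (auto intro!: derivative_eq_intros)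
    have "0 \<le> y' t + K * y t" using lowb[OF t] by simp
    then have "0 \<le> (y' t + K * y t) * exp (K * t)" by simp
    then show "0 \<le> y' t * exp (K * t) + y t * (exp (K * t) * K)" by (simp add: algebra_simps)
  qed
  then have "0 < y t0 * exp (K * t0)" using p0 unfolding h_def y_def by simp
  then show ?thesis unfolding y_def by (simp add: zero_less_mult_iff)
qed

lemma polmass_isCont: "isCont (\<lambda>\<mu>. polmass S \<mu> c w) a"
  unfolding polmass_def by (intro continuous_intros)

lemma isCont_if_const: "isCont f a \<Longrightarrow> isCont (\<lambda>x. if P then f x else 0) a"
  by (cases P) auto

lemma local_growth:
  assumes st: "standing S A phi U m Rd" and C1: "C1_near_X S U m F"
    and Xs: "\<mu>s \<in> popX S U m"
    and ip: "imit_phi (U c) (m c) (rho c) \<phi> L" and v: "v \<in> U c"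
    and vmax: "\<forall>w\<in>U c. F c \<mu>s w \<le> F c \<mu>s v"
    and unused: "\<forall>w\<in>U c. F c \<mu>s w = F c \<mu>s v \<longrightarrow> polmass S \<mu>s c w = 0"
    and Dne: "\<exists>u\<in>U c. F c \<mu>s u < F c \<mu>s v"
  shows "\<exists>r>0. \<exists>k>0. \<forall>\<mu>\<in>popX S U m. dist \<mu> \<mu>s < r \<longrightarrow>
           k * polmass S \<mu> c v \<le> (\<Sum>s\<in>S c. field S A phi U Rd F rho \<mu> $ (c, s, v))"
proof -
  have mpos: "m c > 0" using st unfolding standing_def by auto
  define ps where "ps = F c \<mu>s"
  define \<beta> where "\<beta> = ps v"
  define D where "D = {u\<in>U c. ps u < \<beta>}"
  have finD: "finite D" by simp
  have Dne': "D \<noteq> {}" using Dne unfolding D_def ps_def \<beta>_def by auto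
  have phinn: "\<And>d. 0 \<le> \<phi> d" using imit_phi_nonneg[OF ip] .
  have phi0: "\<And>d. d \<le> 0 \<Longrightarrow> \<phi> d = 0" and phipos: "\<And>d. d > 0 \<Longrightarrow> \<phi> d > 0"
    using ip unfolding imit_phi_def by auto
  have lip: "\<And>a b. \<phi> b - \<bar>L\<bar> * \<bar>a - b\<bar> \<le> \<phi> a"
  proof -
    fix a b
    have "\<bar>\<phi> a - \<phi> b\<bar> \<le> L * \<bar>a - b\<bar>" using ip unfolding imit_phi_def by blast
    moreover have "L * \<bar>a - b\<bar> \<le> \<bar>L\<bar> * \<bar>a - b\<bar>" by (simp add: mult_right_mono)
    ultimately show "\<phi> b - \<bar>L\<bar> * \<bar>a - b\<bar> \<le> \<phi> a" by linarith
  qed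
  define \<kappa> where "\<kappa> = Min ((\<lambda>u. \<phi> (\<beta> - ps u)) ` D)"
  define gap where "gap = Min ((\<lambda>u. \<beta> - ps u) ` D)"
  have kpos: "\<kappa> > 0" unfolding \<kappa>_def using finD Dne' phipos unfolding D_def by auto
  have gpos: "gap > 0" unfolding gap_def using finD Dne' unfolding D_def by auto
  have kle: "\<And>u. u \<in> D \<Longrightarrow> \<kappa> \<le> \<phi> (\<beta> - ps u)" unfolding \<kappa>_def using finD by auto
  have gle: "\<And>u. u \<in> D \<Longrightarrow> gap \<le> \<beta> - ps u" unfolding gap_def using finD by auto
  define \<epsilon> where "\<epsilon> = min (gap / 3) (\<kappa> / (8 * (\<bar>L\<bar> + 1)))"
  have epos: "\<epsilon> > 0" unfolding \<epsilon>_def using gpos kpos by (simp add: add_pos_nonneg)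
  have e1: "3 * \<epsilon> \<le> gap" unfolding \<epsilon>_def by linarith
  have e2: "8 * (\<bar>L\<bar> + 1) * \<epsilon> \<le> \<kappa>"
  proof -
    have "\<epsilon> \<le> \<kappa> / (8 * (\<bar>L\<bar> + 1))" unfolding \<epsilon>_def by linarith
    then show ?thesis by (simp add: pos_le_divide_eq add_pos_nonneg mult.commute)
  qed
  have Le: "\<bar>L\<bar> * (2 * \<epsilon>) \<le> \<kappa> / 4"
  proof -
    have "\<bar>L\<bar> * \<epsilon> \<le> (\<bar>L\<bar> + 1) * \<epsilon>" using epos by (intro mult_right_mono) auto
    then show ?thesis using e2 by linarith
  qed
  define G where "G = (\<lambda>\<mu>. (\<Sum>w\<in>U c. \<bar>F c \<mu> w - ps w\<bar>) + (\<Sum>w\<in>U c. if ps w = \<beta> then polmass S \<mu> c w else 0))"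
  have Gc: "isCont G \<mu>s"
    unfolding G_def
    by (intro continuous_intros F_isCont[OF C1 _ Xs] isCont_if_const polmass_isCont) auto
  have G0: "G \<mu>s = 0"
  proof -
    have "(\<Sum>w\<in>U c. if ps w = \<beta> then polmass S \<mu>s c w else 0) = 0"
      using unused unfolding ps_def \<beta>_def by (intro sum.neutral) auto
    then show ?thesis unfolding G_def ps_def by simp
  qed
  define e0 where "e0 = min \<epsilon> (m c / 4)"
  have e0pos: "e0 > 0" unfolding e0_def using epos mpos by simp
  obtain \<delta> where dpos: "\<delta> > 0" and dG: "\<And>\<mu>. dist \<mu> \<mu>s < \<delta> \<Longrightarrow> dist (G \<mu>) (G \<mu>s) < e0"
    using Gc e0pos unfolding continuous_at_eps_delta by blast
  define k where "k = \<kappa> / 4"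
  have "\<forall>\<mu>\<in>popX S U m. dist \<mu> \<mu>s < \<delta> \<longrightarrow>
           k * polmass S \<mu> c v \<le> (\<Sum>s\<in>S c. field S A phi U Rd F rho \<mu> $ (c, s, v))"
  proof (intro ballI impI)
    fix \<mu> assume X: "\<mu> \<in> popX S U m" and d: "dist \<mu> \<mu>s < \<delta>"
    define xx where "xx = polmass S \<mu> c"
    define \<pi> where "\<pi> = F c \<mu>"
    have xnn: "\<And>u. 0 \<le> xx u" unfolding xx_def using polmass_nonneg[OF X] .
    have xsum: "(\<Sum>u\<in>U c. xx u) = m c" using polmass_distr[OF X, of c] unfolding policy_distr_def xx_def by simp
    have Gl: "G \<mu> < e0" using dG[OF d] G0 by simp
    have S1nn: "0 \<le> (\<Sum>w\<in>U c. \<bar>F c \<mu> w - ps w\<bar>)" by (intro sum_nonneg) auto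
    have S2nn: "0 \<le> (\<Sum>w\<in>U c. if ps w = \<beta> then xx w else 0)" using xnn by (intro sum_nonneg) auto
    have close: "\<And>w. w \<in> U c \<Longrightarrow> \<bar>\<pi> w - ps w\<bar> < \<epsilon>"
    proof -
      fix w assume w: "w \<in> U c"
      have "\<bar>\<pi> w - ps w\<bar> \<le> (\<Sum>w\<in>U c. \<bar>F c \<mu> w - ps w\<bar>)" unfolding \<pi>_def using w by (intro member_le_sum) auto
      then show "\<bar>\<pi> w - ps w\<bar> < \<epsilon>" using Gl S2nn unfolding G_def e0_def xx_def by linarith
    qed
    have Esmall: "(\<Sum>w\<in>U c. if ps w = \<beta> then xx w else 0) \<le> m c / 4"
      using Gl S1nn unfolding G_def e0_def xx_def by linarith
    have cv: "\<bar>\<pi> v - \<beta>\<bar> < \<epsilon>" using close[OF v] unfolding \<beta>_def .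
    have tmb: "\<And>u'. u' \<in> U c \<Longrightarrow> (\<kappa> / 2) * xx u' - (3 * \<kappa> / 4) * (if ps u' = \<beta> then xx u' else 0)
                   \<le> xx u' * (\<phi> (\<pi> v - \<pi> u') - \<phi> (\<pi> u' - \<pi> v))"
    proof -
      fix u' assume u': "u' \<in> U c"
      have cu: "\<bar>\<pi> u' - ps u'\<bar> < \<epsilon>" using close[OF u'] .
      show "(\<kappa> / 2) * xx u' - (3 * \<kappa> / 4) * (if ps u' = \<beta> then xx u' else 0)
                   \<le> xx u' * (\<phi> (\<pi> v - \<pi> u') - \<phi> (\<pi> u' - \<pi> v))"
      proof (cases "ps u' = \<beta>")
        case True
        have "\<phi> (\<pi> u' - \<pi> v) \<le> \<bar>L\<bar> * \<bar>\<pi> u' - \<pi> v\<bar>" by (rule imit_phi_le[OF ip])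
        also have "\<dots> \<le> \<bar>L\<bar> * (2 * \<epsilon>)" using cu cv True by (intro mult_left_mono) auto
        finally have "\<phi> (\<pi> u' - \<pi> v) \<le> \<kappa> / 4" using Le by linarith
        then have "- (\<kappa> / 4) \<le> \<phi> (\<pi> v - \<pi> u') - \<phi> (\<pi> u' - \<pi> v)" using phinn[of "\<pi> v - \<pi> u'"] by linarith
        then have "xx u' * (- (\<kappa> / 4)) \<le> xx u' * (\<phi> (\<pi> v - \<pi> u') - \<phi> (\<pi> u' - \<pi> v))"
          using xnn[of u'] by (rule mult_left_mono)
        then show ?thesis using True by (simp add: algebra_simps)
      next
        case False
        then have uD: "u' \<in> D" using vmax u' unfolding D_def ps_def \<beta>_def by force
        have "\<phi> (\<beta> - ps u') - \<bar>L\<bar> * \<bar>(\<pi> v - \<pi> u') - (\<beta> - ps u')\<bar> \<le> \<phi> (\<pi> v - \<pi> u')" by (rule lip)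
        moreover have "\<bar>L\<bar> * \<bar>(\<pi> v - \<pi> u') - (\<beta> - ps u')\<bar> \<le> \<bar>L\<bar> * (2 * \<epsilon>)"
          using cu cv by (intro mult_left_mono) auto
        ultimately have A1: "3 * \<kappa> / 4 \<le> \<phi> (\<pi> v - \<pi> u')" using kle[OF uD] Le by linarith
        have "\<pi> u' - \<pi> v \<le> 0" using gle[OF uD] cu cv e1 epos by linarith
        then have A2: "\<phi> (\<pi> u' - \<pi> v) = 0" by (rule phi0)
        have "xx u' * (\<kappa> / 2) \<le> xx u' * (\<phi> (\<pi> v - \<pi> u') - \<phi> (\<pi> u' - \<pi> v))"
          using A1 A2 kpos xnn[of u'] by (intro mult_left_mono) auto
        then show ?thesis using False by (simp add: algebra_simps)
      qed
    qed
    have "(\<Sum>u'\<in>U c. (\<kappa> / 2) * xx u' - (3 * \<kappa> / 4) * (if ps u' = \<beta> then xx u' else 0))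
          \<le> (\<Sum>u'\<in>U c. xx u' * (\<phi> (\<pi> v - \<pi> u') - \<phi> (\<pi> u' - \<pi> v)))"
      using tmb by (rule sum_mono)
    moreover have "(\<Sum>u'\<in>U c. (\<kappa> / 2) * xx u' - (3 * \<kappa> / 4) * (if ps u' = \<beta> then xx u' else 0))
          = (\<kappa> / 2) * m c - (3 * \<kappa> / 4) * (\<Sum>w\<in>U c. if ps w = \<beta> then xx w else 0)"
      by (simp only: sum_subtractf sum_distrib_left[symmetric] xsum)
    moreover have "(3 * \<kappa> / 4) * (\<Sum>w\<in>U c. if ps w = \<beta> then xx w else 0) \<le> (3 * \<kappa> / 4) * (m c / 4)"
      using Esmall kpos by (intro mult_left_mono) auto
    ultimately have l1: "\<kappa> / 2 * m c - (3 * \<kappa> / 4) * (m c / 4) \<le> (\<Sum>u'\<in>U c. xx u' * (\<phi> (\<pi> v - \<pi> u') - \<phi> (\<pi> u' - \<pi> v)))"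
      by linarith
    have l2: "\<kappa> / 2 * m c - (3 * \<kappa> / 4) * (m c / 4) = 5 / 16 * (\<kappa> * m c)" by (simp add: algebra_simps)
    have l3: "\<kappa> / 4 * m c = 1 / 4 * (\<kappa> * m c)" by simp
    have l4: "0 < \<kappa> * m c" using kpos mpos by simp
    have low: "\<kappa> / 4 * m c \<le> (\<Sum>u'\<in>U c. xx u' * (\<phi> (\<pi> v - \<pi> u') - \<phi> (\<pi> u' - \<pi> v)))"
      using l1 l2 l3 l4 by linarith
    have eq: "(\<Sum>s\<in>S c. field S A phi U Rd F rho \<mu> $ (c, s, v))
        = xx v / m c * (\<Sum>u'\<in>U c. xx u' * (\<phi> (\<pi> v - \<pi> u') - \<phi> (\<pi> u' - \<pi> v)))"
      unfolding xx_def \<pi>_def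
      by (rule imit_dx[where S=S and U=U and c=c and rho=rho and F=F and A=A and phi=phi and Rd=Rd and m=m, OF st X ip v])
    have "xx v / m c * (\<kappa> / 4 * m c) \<le> xx v / m c * (\<Sum>u'\<in>U c. xx u' * (\<phi> (\<pi> v - \<pi> u') - \<phi> (\<pi> u' - \<pi> v)))"
      using low xnn mpos by (intro mult_left_mono) auto
    moreover have "xx v / m c * (\<kappa> / 4 * m c) = k * xx v" unfolding k_def using mpos by simp
    ultimately have "k * xx v \<le> (\<Sum>s\<in>S c. field S A phi U Rd F rho \<mu> $ (c, s, v))"
      using eq by linarith
    then show "k * polmass S \<mu> c v \<le> (\<Sum>s\<in>S c. field S A phi U Rd F rho \<mu> $ (c, s, v))"
      unfolding xx_def .
  qed
  moreover have "k > 0" unfolding k_def using kpos by simp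
  ultimately show ?thesis using dpos by blast
qed

lemma sum_delta2:
  fixes S :: "'c \<Rightarrow> 's::finite set" and U :: "'c \<Rightarrow> ('s \<Rightarrow> 'a::finite) set"
  assumes s0: "s0 \<in> S c" and w: "w \<in> U c"
  shows "(\<Sum>s\<in>S c'. \<Sum>u\<in>U c'. if (c', s, u) = (c, s0, w) then (\<eta>::real) else 0) = (if c' = c then \<eta> else 0)"
proof (cases "c' = c")
  case True
  have "\<And>s. (\<Sum>u\<in>U c. if (c, s, u) = (c, s0, w) then \<eta> else 0) = (if s = s0 then \<eta> else 0)"
  proof -
    fix s
    show "(\<Sum>u\<in>U c. if (c, s, u) = (c, s0, w) then \<eta> else 0) = (if s = s0 then \<eta> else 0)"
      using w by (cases "s = s0") (simp_all add: sum.delta)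
  qed
  then show ?thesis using True s0 by (simp add: sum.delta)
next
  case False
  then show ?thesis by simp
qed

lemma perturb:
  fixes S :: "'c::finite \<Rightarrow> 's::finite set" and U :: "'c \<Rightarrow> ('s \<Rightarrow> 'a::finite) set"
  assumes Xs: "\<mu>s \<in> popX S U m" and st: "standing S A phi U m Rd" and v: "v \<in> U c"
    and v0: "polmass S \<mu>s c v = 0" and d: "\<delta> > 0"
  shows "\<exists>\<mu>0\<in>popX S U m. dist \<mu>0 \<mu>s < \<delta> \<and> polmass S \<mu>0 c v > 0"
proof -
  obtain u0 where u0: "u0 \<in> U c" "polmass S \<mu>s c u0 > 0" using used_exists[OF Xs st, of c] by blast
  have uv: "u0 \<noteq> v" using u0 v0 by auto
  have "\<exists>s0\<in>S c. \<mu>s $ (c, s0, u0) > 0"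
  proof (rule ccontr)
    assume "\<not> ?thesis"
    then have "\<forall>s\<in>S c. \<mu>s $ (c, s, u0) \<le> 0" by (auto simp: not_less)
    then have "polmass S \<mu>s c u0 \<le> 0" unfolding polmass_def by (intro sum_nonpos) auto
    then show False using u0 by simp
  qed
  then obtain s0 where s0: "s0 \<in> S c" "\<mu>s $ (c, s0, u0) > 0" by blast
  define \<eta> where "\<eta> = min (\<mu>s $ (c, s0, u0)) (\<delta> / 4)"
  have \<eta>pos: "\<eta> > 0" unfolding \<eta>_def using s0 d by simp
  have \<eta>le: "\<eta> \<le> \<mu>s $ (c, s0, u0)" "\<eta> \<le> \<delta> / 4" unfolding \<eta>_def by auto
  define a where "a = (c, s0, v)"
  define b where "b = (c, s0, u0)"
  have ab: "a \<noteq> b" unfolding a_def b_def using uv by simp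
  define \<mu>0 where "\<mu>0 = (\<chi> i. \<mu>s $ i + (if i = a then \<eta> else 0) - (if i = b then \<eta> else 0))"
  have \<mu>0i: "\<And>i. \<mu>0 $ i = \<mu>s $ i + (if i = a then \<eta> else 0) - (if i = b then \<eta> else 0)"
    unfolding \<mu>0_def by simp
  have X0: "\<mu>0 \<in> popX S U m"
    unfolding popX_def
  proof (intro CollectI conjI allI impI)
    fix c' s u
    show "0 \<le> \<mu>0 $ (c', s, u)"
    proof (cases "(c', s, u) = b")
      case True
      then have "(c', s, u) \<noteq> a" using ab by simp
      then show ?thesis using True \<mu>0i \<eta>le(1) unfolding b_def by simp
    next
      case False
      then show ?thesis using \<mu>0i popX_nonneg[OF Xs, of "(c', s, u)"] \<eta>pos by simp
    qed
  next
    fix c' s u assume out: "s \<notin> S c' \<or> u \<notin> U c'"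
    then have "(c', s, u) \<noteq> a" "(c', s, u) \<noteq> b" unfolding a_def b_def using s0 v u0 by auto
    then show "\<mu>0 $ (c', s, u) = 0" using \<mu>0i popX_out[OF Xs out] by simp
  next
    fix c'
    have "(\<Sum>s\<in>S c'. \<Sum>u\<in>U c'. \<mu>0 $ (c', s, u)) =
      (\<Sum>s\<in>S c'. \<Sum>u\<in>U c'. \<mu>s $ (c', s, u)) + (\<Sum>s\<in>S c'. \<Sum>u\<in>U c'. if (c', s, u) = (c, s0, v) then \<eta> else 0)
        - (\<Sum>s\<in>S c'. \<Sum>u\<in>U c'. if (c', s, u) = (c, s0, u0) then \<eta> else 0)"
      unfolding \<mu>0i a_def b_def by (simp add: sum.distrib sum_subtractf)
    also have "\<dots> = m c'"
      using sum_delta2[where S=S and U=U and c=c and c'=c' and \<eta>=\<eta>, OF s0(1) v]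
        sum_delta2[where S=S and U=U and c=c and c'=c' and \<eta>=\<eta>, OF s0(1) u0(1)] Xs
      unfolding popX_def by simp
    finally show "(\<Sum>s\<in>S c'. \<Sum>u\<in>U c'. \<mu>0 $ (c', s, u)) = m c'" .
  qed
  have "dist \<mu>0 \<mu>s \<le> (\<Sum>i\<in>UNIV. \<bar>(\<mu>0 - \<mu>s) $ i\<bar>)" unfolding dist_norm by (rule norm_le_l1_cart)
  also have "\<dots> \<le> (\<Sum>i\<in>UNIV. (if i = a then \<eta> else 0) + (if i = b then \<eta> else 0))"
    using \<eta>pos by (intro sum_mono) (auto simp: \<mu>0i)
  also have "\<dots> = 2 * \<eta>" by (simp add: sum.distrib)
  finally have "dist \<mu>0 \<mu>s < \<delta>" using \<eta>le d by linarith
  moreover have "polmass S \<mu>0 c v > 0"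
  proof -
    have "\<mu>s $ (c, s0, v) = 0" by (rule polmass_zero[OF Xs s0(1) v0])
    then have "\<mu>0 $ (c, s0, v) = \<eta>" using \<mu>0i ab unfolding a_def by simp
    then show ?thesis using le_polmass[OF X0 s0(1), of v] \<eta>pos by simp
  qed
  ultimately show ?thesis using X0 by blast
qed

theorem theorem1:
  fixes S :: "'c::finite \<Rightarrow> 's::finite set"
    and A :: "'c \<Rightarrow> 's \<Rightarrow> 'a::finite set"
    and phi :: "'c \<Rightarrow> 's \<Rightarrow> 'a \<Rightarrow> 's \<Rightarrow> real"
    and U :: "'c \<Rightarrow> ('s \<Rightarrow> 'a) set"
    and m Rd :: "'c \<Rightarrow> real"
    and F :: "'c \<Rightarrow> ('c, 's, 'a) pop \<Rightarrow> ('s \<Rightarrow> 'a) \<Rightarrow> real"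
    and rho :: "'c \<Rightarrow> (('s \<Rightarrow> 'a) \<Rightarrow> real) \<Rightarrow> (('s \<Rightarrow> 'a) \<Rightarrow> real) \<Rightarrow> ('s \<Rightarrow> 'a) \<Rightarrow> ('s \<Rightarrow> 'a) \<Rightarrow> real"
    and \<mu>s :: "('c, 's, 'a) pop"
  assumes "standing S A phi U m Rd"
    and "C1_near_X S U m F"
    and "\<forall>c. imitative_via_comparison (U c) (m c) (rho c)
             \<or> excess_payoff (U c) (m c) (rho c)
             \<or> pairwise_comparison (U c) (m c) (rho c)"
    and "well_posed S A phi U m Rd F rho"
    and "rest_point S A phi U m Rd F rho \<mu>s"
    and "\<mu>s \<notin> MSNE S A phi U m Rd F"
  shows "\<not> lyapunov_stable S A phi U m Rd F rho \<mu>s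
       \<and> (\<forall>x. is_solution S A phi U m Rd F rho x
              \<and> (\<forall>c. \<forall>s\<in>S c. \<forall>u\<in>U c. 0 < x 0 $ (c, s, u))
              \<longrightarrow> \<not> (x \<longlongrightarrow> \<mu>s) at_top)"
proof -
  note st = assms(1) and C1 = assms(2) and prot = assms(3) and wp = assms(4)
    and rp = assms(5) and nm = assms(6)
  have Xs: "\<mu>s \<in> popX S U m" using rp unfolding rest_point_def by simp
  obtain c where bad: "\<not> ((\<forall>u\<in>U c. polmass S \<mu>s c u > 0 \<longrightarrow> (\<forall>v\<in>U c. F c \<mu>s u \<ge> F c \<mu>s v))
      \<and> (\<forall>s\<in>S c. \<forall>u\<in>U c. fd S A phi Rd c s u \<mu>s = 0))"
    using nm Xs unfolding MSNE_def by blast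
  have fd_of_fr: "(\<forall>s\<in>S c. \<forall>u\<in>U c. fr S U F rho c s u \<mu>s = 0) \<Longrightarrow> (\<forall>s\<in>S c. \<forall>u\<in>U c. fd S A phi Rd c s u \<mu>s = 0)"
    using rest_fd[OF rp] by blast
  have "\<not> pairwise_comparison (U c) (m c) (rho c)"
  proof
    assume "pairwise_comparison (U c) (m c) (rho c)"
    from pairwise_ok[OF st rp this] show False using bad fd_of_fr by blast
  qed
  moreover have "\<not> excess_payoff (U c) (m c) (rho c)"
  proof
    assume "excess_payoff (U c) (m c) (rho c)"
    from excess_ok[OF st rp this] show False using bad fd_of_fr by blast
  qed
  ultimately have "imitative_via_comparison (U c) (m c) (rho c)" using prot by blast
  then obtain \<phi> L where ip: "imit_phi (U c) (m c) (rho c) \<phi> L" using imit_phi_ex by blast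
  have io: "\<forall>u\<in>U c. \<forall>w\<in>U c. polmass S \<mu>s c u > 0 \<longrightarrow> polmass S \<mu>s c w > 0 \<longrightarrow> F c \<mu>s u = F c \<mu>s w"
    and "\<forall>s\<in>S c. \<forall>u\<in>U c. fr S U F rho c s u \<mu>s = 0"
    using imit_ok[OF st rp ip] by blast+
  then have "\<forall>s\<in>S c. \<forall>u\<in>U c. fd S A phi Rd c s u \<mu>s = 0" using fd_of_fr by blast
  then obtain u w where u: "u \<in> U c" "polmass S \<mu>s c u > 0" and w: "w \<in> U c" "F c \<mu>s u < F c \<mu>s w"
    using bad by (auto simp: not_le)
  obtain v where v: "v \<in> U c" and vmax: "\<forall>w\<in>U c. F c \<mu>s w \<le> F c \<mu>s v"
    using finite_argmax[of "U c" "F c \<mu>s"] u by auto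
  have Dne: "\<exists>u\<in>U c. F c \<mu>s u < F c \<mu>s v" using u w vmax by force
  have unused: "\<forall>w\<in>U c. F c \<mu>s w = F c \<mu>s v \<longrightarrow> polmass S \<mu>s c w = 0"
  proof (intro ballI impI)
    fix w' assume w': "w' \<in> U c" "F c \<mu>s w' = F c \<mu>s v"
    show "polmass S \<mu>s c w' = 0"
    proof (rule ccontr)
      assume "polmass S \<mu>s c w' \<noteq> 0"
      then have "polmass S \<mu>s c w' > 0" using polmass_nonneg[OF Xs, of c w'] by simp
      then have "F c \<mu>s u = F c \<mu>s w'" using io u w' by blast
      then show False using w' w vmax by force
    qed
  qed
  have v0: "polmass S \<mu>s c v = 0" using unused v by simp
  obtain r k where r: "r > 0" and k: "k > 0" and grow: "\<forall>\<mu>\<in>popX S U m. dist \<mu> \<mu>s < r \<longrightarrow>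
           k * polmass S \<mu> c v \<le> (\<Sum>s\<in>S c. field S A phi U Rd F rho \<mu> $ (c, s, v))"
    using local_growth[where S=S and U=U and c=c and rho=rho and F=F and A=A and phi=phi and Rd=Rd and m=m, OF st C1 Xs ip v vmax unused Dne] by blast
  have part1: "\<not> lyapunov_stable S A phi U m Rd F rho \<mu>s"
    unfolding lyapunov_stable_def
  proof
    assume ls: "\<forall>\<epsilon>>0. \<exists>\<delta>>0. \<forall>x. is_solution S A phi U m Rd F rho x \<and> dist (x 0) \<mu>s < \<delta>
        \<longrightarrow> (\<forall>t\<ge>0. dist (x t) \<mu>s < \<epsilon>)"
    obtain \<delta> where d: "\<delta> > 0" and dd: "\<forall>x. is_solution S A phi U m Rd F rho x \<and> dist (x 0) \<mu>s < \<delta>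
        \<longrightarrow> (\<forall>t\<ge>0. dist (x t) \<mu>s < r)" using ls r by blast
    obtain \<mu>0 where \<mu>0: "\<mu>0 \<in> popX S U m" "dist \<mu>0 \<mu>s < \<delta>" "polmass S \<mu>0 c v > 0"
      using perturb[OF Xs st v v0 d] by blast
    obtain x where sol: "is_solution S A phi U m Rd F rho x" and x0: "x 0 = \<mu>0"
      using wp \<mu>0(1) unfolding well_posed_def by blast
    obtain t where t: "t \<ge> 0" "dist (x t) \<mu>s \<ge> r"
      using escape[OF sol order.refl v k grow] \<mu>0(3) x0 by auto
    have "dist (x t) \<mu>s < r" using dd sol x0 \<mu>0(2) t(1) by blast
    then show False using t by simp
  qed
  have part2: "\<forall>x. is_solution S A phi U m Rd F rho x
              \<and> (\<forall>c. \<forall>s\<in>S c. \<forall>u\<in>U c. 0 < x 0 $ (c, s, u))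
              \<longrightarrow> \<not> (x \<longlongrightarrow> \<mu>s) at_top"
  proof (intro allI impI notI)
    fix x assume h: "is_solution S A phi U m Rd F rho x \<and> (\<forall>c. \<forall>s\<in>S c. \<forall>u\<in>U c. 0 < x 0 $ (c, s, u))"
      and lim: "(x \<longlongrightarrow> \<mu>s) at_top"
    have sol: "is_solution S A phi U m Rd F rho x" using h by blast
    have "S c \<noteq> {}"
    proof -
      have "recurrent_states S A phi c v \<noteq> {}" using st v unfolding standing_def unique_recurrent_class_def by blast
      then show ?thesis unfolding recurrent_states_def by blast
    qed
    then obtain s1 where s1: "s1 \<in> S c" by blast
    have p0: "polmass S (x 0) c v > 0"
    proof -
      have "0 < x 0 $ (c, s1, v)" using h s1 v by blast
      also have "\<dots> \<le> polmass S (x 0) c v" using le_polmass[OF sol_X[OF sol order.refl] s1] .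
      finally show ?thesis .
    qed
    have "\<forall>\<^sub>F t in at_top. dist (x t) \<mu>s < r" using tendstoD[OF lim r] .
    then obtain N where N: "\<And>t. t \<ge> N \<Longrightarrow> dist (x t) \<mu>s < r" unfolding eventually_at_top_linorder by blast
    define T where "T = max N 0"
    have T0: "T \<ge> 0" unfolding T_def by simp
    have pT: "polmass S (x T) c v > 0" using stays_pos[OF st C1 sol ip v p0 T0] .
    obtain t where t: "t \<ge> T" "dist (x t) \<mu>s \<ge> r"
      using escape[OF sol T0 v k grow pT] by blast
    have "dist (x t) \<mu>s < r" using N t(1) unfolding T_def by simp
    then show False using t by simp
  qed
  show ?thesis using part1 part2 by blast
qed

end
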